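(* A finite graph is $\mathcal{C}$-$\mathrm{MI}$ if and only if it is isomorphic to a disjoint union of copies of one of the following: (i) a complete graph $K_n$ ($n\ge1$); (ii) a complete bipartite graph $K_{s,s}$ with parts of the same size ($s\ge2$); (iii) a cycle $C_n$ ($n\ge3$).
   Context: Graphs are simple; subgraphs are induced. A homomorphism of graphs maps edges to edges; a monomorphism is an injective homomorphism; an automorphism is a bijective endomorphism whose inverse is also a homomorphism. A graph $G$ is $\mathcal{C}$-$\mathrm{MI}$ if every monomorphism from a finite connected induced subgraph of $G$ into $G$ extends to an automorphism of $G$. *)

theory Defs
  imports Main
begin

definition fin_graph :: "'a set \<Rightarrow> ('a \<Rightarrow> 'a \<Rightarrow> bool) \<Rightarrow> bool" where
  "fin_graph V E \<longleftrightarrow> finite V \<and> (\<forall>x y. E x y \<longrightarrow> x \<in> V \<and> y \<in> V)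
     \<and> (\<forall>x y. E x y \<longrightarrow> E y x) \<and> (\<forall>x. \<not> E x x)"

definition conn_induced :: "'a set \<Rightarrow> ('a \<Rightarrow> 'a \<Rightarrow> bool) \<Rightarrow> 'a set \<Rightarrow> bool" where
  "conn_induced V E A \<longleftrightarrow> A \<subseteq> V \<and> finite A \<and> A \<noteq> {} \<and>
     (\<forall>x\<in>A. \<forall>y\<in>A. (\<lambda>u v. u \<in> A \<and> v \<in> A \<and> E u v)\<^sup>*\<^sup>* x y)"

definition mono_from :: "'a set \<Rightarrow> ('a \<Rightarrow> 'a \<Rightarrow> bool) \<Rightarrow> 'a set \<Rightarrow> ('a \<Rightarrow> 'a) \<Rightarrow> bool" where
  "mono_from V E A f \<longleftrightarrow> f ` A \<subseteq> V \<and> inj_on f A \<and>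
     (\<forall>x\<in>A. \<forall>y\<in>A. E x y \<longrightarrow> E (f x) (f y))"

definition automorphism :: "'a set \<Rightarrow> ('a \<Rightarrow> 'a \<Rightarrow> bool) \<Rightarrow> ('a \<Rightarrow> 'a) \<Rightarrow> bool" where
  "automorphism V E g \<longleftrightarrow> bij_betw g V V \<and> (\<forall>x\<in>V. \<forall>y\<in>V. E x y \<longleftrightarrow> E (g x) (g y))"

definition C_MI :: "'a set \<Rightarrow> ('a \<Rightarrow> 'a \<Rightarrow> bool) \<Rightarrow> bool" where
  "C_MI V E \<longleftrightarrow> (\<forall>A f. conn_induced V E A \<and> mono_from V E A f \<longrightarrow>
     (\<exists>g. automorphism V E g \<and> (\<forall>x\<in>A. g x = f x)))"

definition graph_iso :: "'a set \<Rightarrow> ('a \<Rightarrow> 'a \<Rightarrow> bool) \<Rightarrow> 'b set \<Rightarrow> ('b \<Rightarrow> 'b \<Rightarrow> bool) \<Rightarrow> bool" where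
  "graph_iso V E W F \<longleftrightarrow> (\<exists>h. bij_betw h V W \<and> (\<forall>x\<in>V. \<forall>y\<in>V. E x y \<longleftrightarrow> F (h x) (h y)))"

definition K_V :: "nat \<Rightarrow> nat set" where "K_V n = {0..<n}"
definition K_E :: "nat \<Rightarrow> nat \<Rightarrow> nat \<Rightarrow> bool" where
  "K_E n i j \<longleftrightarrow> i < n \<and> j < n \<and> i \<noteq> j"

definition Kss_V :: "nat \<Rightarrow> nat set" where "Kss_V s = {0..<2*s}"
definition Kss_E :: "nat \<Rightarrow> nat \<Rightarrow> nat \<Rightarrow> bool" where
  "Kss_E s i j \<longleftrightarrow> i < 2*s \<and> j < 2*s \<and> ((i < s \<and> s \<le> j) \<or> (j < s \<and> s \<le> i))"

definition C_V :: "nat \<Rightarrow> nat set" where "C_V n = {0..<n}"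
definition C_E :: "nat \<Rightarrow> nat \<Rightarrow> nat \<Rightarrow> bool" where
  "C_E n i j \<longleftrightarrow> i < n \<and> j < n \<and> (j = (i + 1) mod n \<or> i = (j + 1) mod n)"

definition copies_V :: "nat \<Rightarrow> 'b set \<Rightarrow> (nat \<times> 'b) set" where
  "copies_V m W = {0..<m} \<times> W"
definition copies_E :: "nat \<Rightarrow> ('b \<Rightarrow> 'b \<Rightarrow> bool) \<Rightarrow> nat \<times> 'b \<Rightarrow> nat \<times> 'b \<Rightarrow> bool" where
  "copies_E m F p q \<longleftrightarrow> fst p < m \<and> fst p = fst q \<and> F (snd p) (snd q)"

end

theory Submission
  imports Defs
begin

lemma rtranclp_map_rel:
  assumes "R\<^sup>*\<^sup>* x y" "\<And>u v. R u v \<Longrightarrow> S (h u) (h v)"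
  shows "S\<^sup>*\<^sup>* (h x) (h y)"
  using assms(1) by (induction rule: rtranclp_induct) (auto intro: rtranclp.rtrancl_into_rtrancl assms(2))

lemma rtranclp_const:
  assumes "R\<^sup>*\<^sup>* x y" "\<And>u v. R u v \<Longrightarrow> h u = h v"
  shows "h x = h y"
  using assms(1) by (induction rule: rtranclp_induct) (auto dest: assms(2))

lemma ext_bij:
  assumes "finite S" "finite T" "card S = card T" "A \<subseteq> S" "inj_on f A" "f ` A \<subseteq> T"
  shows "\<exists>g. bij_betw g S T \<and> (\<forall>x\<in>A. g x = f x)"
proof -
  have fA: "finite A" using assms(1,4) finite_subset by blast
  have "card (S - A) = card (T - f ` A)"
    using assms fA by (simp add: card_Diff_subset card_image finite_subset)
  then obtain b where b: "bij_betw b (S - A) (T - f ` A)"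
    using finite_same_card_bij assms(1,2) by blast
  define g where "g x = (if x \<in> A then f x else b x)" for x
  have "bij_betw g S T"
  proof (rule bij_betwI')
    fix x y assume "x \<in> S" "y \<in> S"
    then show "(g x = g y) = (x = y)"
    proof (cases "x \<in> A"; cases "y \<in> A")
      assume "x \<in> A" "y \<in> A" then show ?thesis using assms(5) unfolding g_def inj_on_def by auto
    next
      assume "x \<notin> A" "y \<notin> A" then show ?thesis using b \<open>x \<in> S\<close> \<open>y \<in> S\<close>
        unfolding g_def bij_betw_def inj_on_def by auto
    next
      assume "x \<in> A" "y \<notin> A"
      then have "b y \<notin> f ` A" using b \<open>y \<in> S\<close> unfolding bij_betw_def by auto
      then show ?thesis using \<open>x \<in> A\<close> \<open>y \<notin> A\<close> unfolding g_def by (auto simp: image_iff)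
    next
      assume "x \<notin> A" "y \<in> A"
      then have "b x \<notin> f ` A" using b \<open>x \<in> S\<close> unfolding bij_betw_def by auto
      then show ?thesis using \<open>x \<notin> A\<close> \<open>y \<in> A\<close> unfolding g_def by (auto simp: image_iff)
    qed
  next
    fix x assume "x \<in> S" then show "g x \<in> T"
      using b assms(6) unfolding g_def bij_betw_def by auto
  next
    fix y assume y: "y \<in> T"
    show "\<exists>x\<in>S. y = g x"
    proof (cases "y \<in> f ` A")
      case True then show ?thesis using assms(4) unfolding g_def by auto
    next
      case False
      then have "y \<in> b ` (S - A)" using b y unfolding bij_betw_def by auto
      then show ?thesis unfolding g_def by auto
    qed
  qed
  then show ?thesis unfolding g_def by auto
qed

lemma C_MI_iso:
  assumes fg: "fin_graph V E" and h: "bij_betw h V W"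
    and hE: "\<forall>x\<in>V. \<forall>y\<in>V. E x y \<longleftrightarrow> F (h x) (h y)"
    and FW: "\<forall>x y. F x y \<longrightarrow> x \<in> W \<and> y \<in> W" and C: "C_MI W F"
  shows "C_MI V E"
  unfolding C_MI_def
proof (intro allI impI, elim conjE)
  fix A f assume cA: "conn_induced V E A" and mf: "mono_from V E A f"
  have EV: "\<And>x y. E x y \<Longrightarrow> x \<in> V \<and> y \<in> V" using fg unfolding fin_graph_def by blast
  define h' where "h' = inv_into V h"
  have h'h: "\<And>x. x \<in> V \<Longrightarrow> h' (h x) = x" unfolding h'_def using h bij_betw_inv_into_left by fast
  have hh': "\<And>y. y \<in> W \<Longrightarrow> h (h' y) = y" unfolding h'_def using h bij_betw_inv_into_right by fast
  have h'W: "\<And>y. y \<in> W \<Longrightarrow> h' y \<in> V" unfolding h'_def using h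
    by (metis bij_betw_imp_surj_on inv_into_into)
  have hV: "\<And>x. x \<in> V \<Longrightarrow> h x \<in> W" using h bij_betw_apply by fast
  have AV: "A \<subseteq> V" using cA unfolding conn_induced_def by auto
  have fV: "\<And>a. a \<in> A \<Longrightarrow> f a \<in> V" using mf unfolding mono_from_def by auto
  define A' where "A' = h ` A"
  define f' where "f' = (\<lambda>y. h (f (h' y)))"
  have "conn_induced W F A'"
    unfolding conn_induced_def
  proof (intro conjI ballI)
    show "A' \<subseteq> W" using AV hV unfolding A'_def by auto
    show "finite A'" using cA unfolding A'_def conn_induced_def by auto
    show "A' \<noteq> {}" using cA unfolding A'_def conn_induced_def by auto
    fix x' y' assume "x' \<in> A'" "y' \<in> A'"
    then obtain x y where xy: "x \<in> A" "y \<in> A" "x' = h x" "y' = h y" unfolding A'_def by auto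
    have "(\<lambda>u v. u \<in> A \<and> v \<in> A \<and> E u v)\<^sup>*\<^sup>* x y" using cA xy unfolding conn_induced_def by auto
    then show "(\<lambda>u v. u \<in> A' \<and> v \<in> A' \<and> F u v)\<^sup>*\<^sup>* x' y'"
      unfolding xy(3,4)
      by (rule rtranclp_map_rel) (use hE AV in \<open>auto simp: A'_def\<close>)
  qed
  moreover have "mono_from W F A' f'"
    unfolding mono_from_def
  proof (intro conjI ballI impI)
    show "f' ` A' \<subseteq> W" using AV fV hV h'h unfolding A'_def f'_def by auto
    show "inj_on f' A'" unfolding inj_on_def A'_def f'_def
      using AV h'h fV mf unfolding mono_from_def inj_on_def
      by (metis (no_types, lifting) image_iff subsetD)
    fix x' y' assume "x' \<in> A'" "y' \<in> A'" "F x' y'"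
    then obtain x y where xy: "x \<in> A" "y \<in> A" "x' = h x" "y' = h y" unfolding A'_def by auto
    then have "E x y" using hE AV \<open>F x' y'\<close> by auto
    then have "E (f x) (f y)" using mf xy unfolding mono_from_def by auto
    moreover have "h' (h x) = x" "h' (h y) = y" using h'h AV xy by auto
    ultimately show "F (f' x') (f' y')" unfolding f'_def xy using hE fV xy by auto
  qed
  ultimately obtain g' where g': "automorphism W F g'" "\<forall>x\<in>A'. g' x = f' x"
    using C unfolding C_MI_def by blast
  define g where "g = (\<lambda>x. h' (g' (h x)))"
  have g'W: "\<And>y. y \<in> W \<Longrightarrow> g' y \<in> W" using g' unfolding automorphism_def bij_betw_def by auto
  have "bij_betw g V V" unfolding g_def
  proof -
    have "bij_betw h' W V" unfolding h'_def using h by (rule bij_betw_inv_into)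
    moreover have "bij_betw g' W W" using g' unfolding automorphism_def by auto
    ultimately have "bij_betw (h' \<circ> g' \<circ> h) V V" using h by (meson bij_betw_trans)
    then show "bij_betw (\<lambda>x. h' (g' (h x))) V V" by (simp add: comp_def)
  qed
  moreover have "\<forall>x\<in>V. \<forall>y\<in>V. E x y \<longleftrightarrow> E (g x) (g y)"
  proof (intro ballI)
    fix x y assume xy: "x \<in> V" "y \<in> V"
    have "E x y \<longleftrightarrow> F (h x) (h y)" using hE xy by auto
    also have "\<dots> \<longleftrightarrow> F (g' (h x)) (g' (h y))" using g' hV xy unfolding automorphism_def by auto
    also have "\<dots> \<longleftrightarrow> E (g x) (g y)" unfolding g_def using hE h'W g'W hV xy hh' by auto
    finally show "E x y \<longleftrightarrow> E (g x) (g y)" .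
  qed
  moreover have "\<forall>x\<in>A. g x = f x"
    using g'(2) AV fV h'h unfolding g_def A'_def f'_def by auto
  ultimately show "\<exists>g. automorphism V E g \<and> (\<forall>x\<in>A. g x = f x)"
    unfolding automorphism_def by blast
qed


lemma C_MI_copies:
  assumes C: "C_MI W F" and FW: "\<forall>x y. F x y \<longrightarrow> x \<in> W \<and> y \<in> W"
  shows "C_MI (copies_V m W) (copies_E m F)"
  unfolding C_MI_def
proof (intro allI impI, elim conjE)
  fix A f assume cA: "conn_induced (copies_V m W) (copies_E m F) A"
    and mf: "mono_from (copies_V m W) (copies_E m F) A f"
  let ?R = "\<lambda>u v. u \<in> A \<and> v \<in> A \<and> copies_E m F u v"
  have AV: "A \<subseteq> copies_V m W" and finA: "finite A" and neA: "A \<noteq> {}"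
    and reach: "\<And>x y. x \<in> A \<Longrightarrow> y \<in> A \<Longrightarrow> ?R\<^sup>*\<^sup>* x y"
    using cA unfolding conn_induced_def by auto
  obtain a0 where a0: "a0 \<in> A" using neA by auto
  define i where "i = fst a0"
  define j where "j = fst (f a0)"
  have fstA: "\<And>a. a \<in> A \<Longrightarrow> fst a = i"
  proof -
    fix a assume "a \<in> A"
    then have "?R\<^sup>*\<^sup>* a0 a" using reach a0 by auto
    then show "fst a = i" unfolding i_def
      by (rule rtranclp_const[where h="fst", symmetric]) (auto simp: copies_E_def)
  qed
  have fstf: "\<And>a. a \<in> A \<Longrightarrow> fst (f a) = j"
  proof -
    fix a assume "a \<in> A"
    then have "?R\<^sup>*\<^sup>* a0 a" using reach a0 by auto
    then show "fst (f a) = j" unfolding j_def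
      by (rule rtranclp_const[where h="\<lambda>x. fst (f x)", symmetric])
         (use mf in \<open>auto simp: mono_from_def copies_E_def\<close>)
  qed
  have im: "m > i" "i < m" "j < m" using AV a0 mf unfolding i_def j_def copies_V_def mono_from_def by auto
  have fV: "\<And>a. a \<in> A \<Longrightarrow> f a \<in> copies_V m W" using mf unfolding mono_from_def by auto
  have Aeq: "\<And>a. a \<in> A \<Longrightarrow> a = (i, snd a)" using fstA by (metis prod.collapse)
  define A0 where "A0 = snd ` A"
  define f0 where "f0 = (\<lambda>w. snd (f (i, w)))"
  have A0iff: "\<And>w. w \<in> A0 \<longleftrightarrow> (i, w) \<in> A" unfolding A0_def using Aeq by force
  have "conn_induced W F A0"
    unfolding conn_induced_def
  proof (intro conjI ballI)
    show "A0 \<subseteq> W" using AV unfolding A0_def copies_V_def by auto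
    show "finite A0" using finA unfolding A0_def by auto
    show "A0 \<noteq> {}" using neA unfolding A0_def by auto
    fix x y assume "x \<in> A0" "y \<in> A0"
    then have "?R\<^sup>*\<^sup>* (i,x) (i,y)" using reach A0iff by auto
    then have "(\<lambda>u v. u \<in> A0 \<and> v \<in> A0 \<and> F u v)\<^sup>*\<^sup>* (snd (i,x)) (snd (i,y))"
      by (rule rtranclp_map_rel) (auto simp: A0_def copies_E_def)
    then show "(\<lambda>u v. u \<in> A0 \<and> v \<in> A0 \<and> F u v)\<^sup>*\<^sup>* x y" by simp
  qed
  moreover have "mono_from W F A0 f0"
    unfolding mono_from_def
  proof (intro conjI ballI impI)
    show "f0 ` A0 \<subseteq> W" using fV A0iff unfolding f0_def copies_V_def by force
    show "inj_on f0 A0"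
    proof (rule inj_onI)
      fix x y assume xy: "x \<in> A0" "y \<in> A0" "f0 x = f0 y"
      then have "f (i,x) = f (i,y)" using fstf A0iff unfolding f0_def by (metis prod.collapse)
      moreover have "(i,x) \<in> A" "(i,y) \<in> A" using xy A0iff by auto
    ultimately have "(i,x) = (i,y)" using mf unfolding mono_from_def inj_on_def by blast
    then show "x = y" by simp
    qed
    fix x y assume xy: "x \<in> A0" "y \<in> A0" "F x y"
    then have "copies_E m F (i,x) (i,y)" using im unfolding copies_E_def by auto
    then have "copies_E m F (f (i,x)) (f (i,y))" using mf xy A0iff unfolding mono_from_def by auto
    then show "F (f0 x) (f0 y)" unfolding f0_def copies_E_def by auto
  qed
  ultimately obtain \<sigma> where \<sigma>: "automorphism W F \<sigma>" "\<forall>x\<in>A0. \<sigma> x = f0 x"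
    using C unfolding C_MI_def by blast
  define \<sigma>' where "\<sigma>' = inv_into W \<sigma>"
  have sb: "bij_betw \<sigma> W W" using \<sigma> unfolding automorphism_def by auto
  have s1: "\<And>x. x \<in> W \<Longrightarrow> \<sigma>' (\<sigma> x) = x" unfolding \<sigma>'_def using sb bij_betw_inv_into_left by fast
  have s2: "\<And>y. y \<in> W \<Longrightarrow> \<sigma> (\<sigma>' y) = y" unfolding \<sigma>'_def using sb bij_betw_inv_into_right by fast
  have s3: "\<And>y. y \<in> W \<Longrightarrow> \<sigma>' y \<in> W" unfolding \<sigma>'_def using sb
    by (metis bij_betw_imp_surj_on inv_into_into)
  have s4: "\<And>y. y \<in> W \<Longrightarrow> \<sigma> y \<in> W" using sb bij_betw_apply by fast
  have sE: "\<And>x y. x \<in> W \<Longrightarrow> y \<in> W \<Longrightarrow> F x y \<longleftrightarrow> F (\<sigma> x) (\<sigma> y)"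
    using \<sigma> unfolding automorphism_def by auto
  have sE': "\<And>x y. x \<in> W \<Longrightarrow> y \<in> W \<Longrightarrow> F x y \<longleftrightarrow> F (\<sigma>' x) (\<sigma>' y)"
    using sE s2 s3 by metis
  define g where "g = (\<lambda>p. if fst p = i then (j, \<sigma> (snd p)) else if fst p = j then (i, \<sigma>' (snd p)) else p)"
  define g' where "g' = (\<lambda>p. if fst p = j then (i, \<sigma>' (snd p)) else if fst p = i then (j, \<sigma> (snd p)) else p)"
  have gV: "\<And>p. p \<in> copies_V m W \<Longrightarrow> g p \<in> copies_V m W"
    unfolding g_def copies_V_def using im s3 s4 by auto
  have "bij_betw g (copies_V m W) (copies_V m W)"
  proof (rule bij_betwI')
    fix x y assume xy: "x \<in> copies_V m W" "y \<in> copies_V m W"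
    have "g' (g x) = x" "g' (g y) = y" using xy s1 s2 unfolding g_def g'_def copies_V_def by auto
    then show "(g x = g y) = (x = y)" by metis
  next
    fix x assume "x \<in> copies_V m W" then show "g x \<in> copies_V m W" by (rule gV)
  next
    fix y assume y: "y \<in> copies_V m W"
    have "g (g' y) = y" "g' y \<in> copies_V m W" using y s1 s2 s3 s4 im
      unfolding g_def g'_def copies_V_def by auto
    then show "\<exists>x\<in>copies_V m W. y = g x" by metis
  qed
  moreover have "\<forall>x\<in>copies_V m W. \<forall>y\<in>copies_V m W.
      copies_E m F x y \<longleftrightarrow> copies_E m F (g x) (g y)"
  proof (intro ballI)
    fix x y assume xy: "x \<in> copies_V m W" "y \<in> copies_V m W"
    then obtain a b c e where ab: "x = (a,b)" "y = (c,e)" "a < m" "c < m" "b \<in> W" "e \<in> W"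
      unfolding copies_V_def by auto
    show "copies_E m F x y \<longleftrightarrow> copies_E m F (g x) (g y)"
      unfolding ab g_def copies_E_def using im sE[OF ab(5,6)] sE'[OF ab(5,6)]
      apply (simp only: fst_conv snd_conv)
      apply (cases "a = i"; cases "c = i"; cases "a = j"; cases "c = j")
      apply (auto)
      done
  qed
  moreover have "\<forall>x\<in>A. g x = f x"
  proof
    fix a assume a: "a \<in> A"
    have "snd a \<in> A0" using a unfolding A0_def by auto
    then have "\<sigma> (snd a) = snd (f a)" using \<sigma>(2) Aeq[OF a] unfolding f0_def by (metis)
    then show "g a = f a" unfolding g_def using fstA[OF a] fstf[OF a] by (metis prod.collapse)
  qed
  ultimately show "\<exists>g. automorphism (copies_V m W) (copies_E m F) g \<and> (\<forall>x\<in>A. g x = f x)"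
    unfolding automorphism_def by blast
qed


lemma C_MI_K: "C_MI (K_V n) (K_E n)"
  unfolding C_MI_def
proof (intro allI impI, elim conjE)
  fix A f assume cA: "conn_induced (K_V n) (K_E n) A" and mf: "mono_from (K_V n) (K_E n) A f"
  obtain g where g: "bij_betw g (K_V n) (K_V n)" "\<forall>x\<in>A. g x = f x"
    using ext_bij[of "K_V n" "K_V n" A f] cA mf unfolding conn_induced_def mono_from_def K_V_def
    by auto
  have "\<forall>x\<in>K_V n. \<forall>y\<in>K_V n. K_E n x y \<longleftrightarrow> K_E n (g x) (g y)"
  proof (intro ballI)
    fix x y assume xy: "x \<in> K_V n" "y \<in> K_V n"
    have "g x \<in> K_V n" "g y \<in> K_V n" using xy g(1) bij_betw_apply by fast+
    moreover have "g x = g y \<longleftrightarrow> x = y" using xy g(1) unfolding bij_betw_def inj_on_def by blast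
    ultimately show "K_E n x y \<longleftrightarrow> K_E n (g x) (g y)" using xy unfolding K_E_def K_V_def by auto
  qed
  then show "\<exists>g. automorphism (K_V n) (K_E n) g \<and> (\<forall>x\<in>A. g x = f x)"
    using g unfolding automorphism_def by blast
qed

lemma C_MI_Kss: "C_MI (Kss_V s) (Kss_E s)"
  unfolding C_MI_def
proof (intro allI impI, elim conjE)
  fix A f assume cA: "conn_induced (Kss_V s) (Kss_E s) A" and mf: "mono_from (Kss_V s) (Kss_E s) A f"
  let ?R = "\<lambda>u v. u \<in> A \<and> v \<in> A \<and> Kss_E s u v"
  have AV: "A \<subseteq> {0..<2*s}" and neA: "A \<noteq> {}"
    and reach: "\<And>x y. x \<in> A \<Longrightarrow> y \<in> A \<Longrightarrow> ?R\<^sup>*\<^sup>* x y"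
    using cA unfolding conn_induced_def Kss_V_def by auto
  have fV: "f ` A \<subseteq> {0..<2*s}" and finj: "inj_on f A"
    and fE: "\<And>x y. x \<in> A \<Longrightarrow> y \<in> A \<Longrightarrow> Kss_E s x y \<Longrightarrow> Kss_E s (f x) (f y)"
    using mf unfolding mono_from_def Kss_V_def by auto
  obtain a0 where a0: "a0 \<in> A" using neA by auto
  define b where "b = ((a0 < s) = (f a0 < s))"
  have side: "\<And>a. a \<in> A \<Longrightarrow> ((a < s) = (f a < s)) = b"
  proof -
    fix a assume "a \<in> A"
    then have "?R\<^sup>*\<^sup>* a0 a" using reach a0 by auto
    then show "((a < s) = (f a < s)) = b" unfolding b_def
    proof (rule rtranclp_const[where h="\<lambda>a. ((a < s) = (f a < s))", symmetric])
      fix u v assume "?R u v"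
      then have "Kss_E s u v" "Kss_E s (f u) (f v)" using fE by auto
      then have "(u < s) \<noteq> (v < s)" "(f u < s) \<noteq> (f v < s)"
        unfolding Kss_E_def by auto
      then show "((u < s) = (f u < s)) = ((v < s) = (f v < s))" by blast
    qed
  qed
  define L where "L = {0..<s}"
  define R where "R = {s..<2*s}"
  define T1 where "T1 = (if b then L else R)"
  define T2 where "T2 = (if b then R else L)"
  have cLR: "card L = card R" unfolding L_def R_def by auto
  obtain gL where gL: "bij_betw gL L T1" "\<forall>x\<in>A \<inter> L. gL x = f x"
  proof -
    have "\<exists>g. bij_betw g L T1 \<and> (\<forall>x\<in>A \<inter> L. g x = f x)"
    proof (rule ext_bij)
      show "finite L" "finite T1" "card L = card T1" "A \<inter> L \<subseteq> L" using cLR unfolding T1_def L_def R_def by auto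
      show "inj_on f (A \<inter> L)" using finj by (rule inj_on_subset) auto
      show "f ` (A \<inter> L) \<subseteq> T1"
      proof
        fix y assume "y \<in> f ` (A \<inter> L)"
        then obtain a where a: "a \<in> A" "a < s" "y = f a" unfolding L_def by auto
        have "f a < 2*s" using fV a by auto
        then show "y \<in> T1" using side[OF a(1)] a unfolding T1_def L_def R_def by (cases b) auto
      qed
    qed
    then show ?thesis using that by blast
  qed
  obtain gR where gR: "bij_betw gR R T2" "\<forall>x\<in>A \<inter> R. gR x = f x"
  proof -
    have "\<exists>g. bij_betw g R T2 \<and> (\<forall>x\<in>A \<inter> R. g x = f x)"
    proof (rule ext_bij)
      show "finite R" "finite T2" "card R = card T2" "A \<inter> R \<subseteq> R" using cLR unfolding T2_def L_def R_def by auto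
      show "inj_on f (A \<inter> R)" using finj by (rule inj_on_subset) auto
      show "f ` (A \<inter> R) \<subseteq> T2"
      proof
        fix y assume "y \<in> f ` (A \<inter> R)"
        then obtain a where a: "a \<in> A" "s \<le> a" "y = f a" unfolding R_def by auto
        have "f a < 2*s" using fV a by auto
        then show "y \<in> T2" using side[OF a(1)] a unfolding T2_def L_def R_def by (cases b) auto
      qed
    qed
    then show ?thesis using that by blast
  qed
  define g where "g x = (if x < s then gL x else gR x)" for x
  have LR: "Kss_V s = L \<union> R" "L \<inter> R = {}" unfolding Kss_V_def L_def R_def by auto
  have T12: "Kss_V s = T1 \<union> T2" "T1 \<inter> T2 = {}" unfolding T1_def T2_def Kss_V_def L_def R_def by auto
  have gb: "bij_betw g (Kss_V s) (Kss_V s)"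
  proof -
    have "bij_betw g L T1" using gL(1) by (rule bij_betw_cong[THEN iffD1, rotated]) (auto simp: g_def L_def)
    moreover have "bij_betw g R T2" using gR(1) by (rule bij_betw_cong[THEN iffD1, rotated]) (auto simp: g_def R_def)
    ultimately have "bij_betw g (L \<union> R) (T1 \<union> T2)" using T12(2) by (rule bij_betw_combine)
    then show ?thesis using LR T12 by simp
  qed
  have gside: "\<And>x. x \<in> Kss_V s \<Longrightarrow> (g x < s) = ((x < s) = b)"
  proof -
    fix x assume "x \<in> Kss_V s"
    then show "(g x < s) = ((x < s) = b)"
    proof (cases "x < s")
      case True
      then have "x \<in> L" unfolding L_def by auto
      then have "gL x \<in> T1" using bij_betw_apply[OF gL(1)] by blast
      then show ?thesis using True unfolding g_def T1_def L_def R_def by (cases b) auto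
    next
      case False
      then have "x \<in> R" using \<open>x \<in> Kss_V s\<close> unfolding R_def Kss_V_def by auto
      then have "gR x \<in> T2" using bij_betw_apply[OF gR(1)] by blast
      then show ?thesis using False unfolding g_def T2_def L_def R_def by (cases b) auto
    qed
  qed
  have gV: "\<And>x. x \<in> Kss_V s \<Longrightarrow> g x \<in> Kss_V s" using gb bij_betw_apply by fast
  have "\<forall>x\<in>Kss_V s. \<forall>y\<in>Kss_V s. Kss_E s x y \<longleftrightarrow> Kss_E s (g x) (g y)"
  proof (intro ballI)
    fix x y assume xy: "x \<in> Kss_V s" "y \<in> Kss_V s"
    have "Kss_E s x y \<longleftrightarrow> (x < s) \<noteq> (y < s)" using xy unfolding Kss_E_def Kss_V_def by auto
    moreover have "Kss_E s (g x) (g y) \<longleftrightarrow> (g x < s) \<noteq> (g y < s)"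
      using gV[OF xy(1)] gV[OF xy(2)] unfolding Kss_E_def Kss_V_def by auto
    ultimately show "Kss_E s x y \<longleftrightarrow> Kss_E s (g x) (g y)" using gside xy by auto
  qed
  moreover have "\<forall>x\<in>A. g x = f x"
    using gL(2) gR(2) AV unfolding g_def L_def R_def by auto
  ultimately show "\<exists>g. automorphism (Kss_V s) (Kss_E s) g \<and> (\<forall>x\<in>A. g x = f x)"
    using gb unfolding automorphism_def by blast
qed


lemma CE_alt: "C_E n i j \<longleftrightarrow> i < n \<and> j < n \<and>
   (j = (if Suc i = n then 0 else Suc i) \<or> i = (if Suc j = n then 0 else Suc j))"
proof -
  have "\<And>k. k < n \<Longrightarrow> (k + 1) mod n = (if Suc k = n then 0 else Suc k)"
    by (auto simp: Suc_lessI)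
  then show ?thesis unfolding C_E_def by auto
qed

definition nx :: "nat \<Rightarrow> nat \<Rightarrow> nat" where "nx n i = (if Suc i = n then 0 else Suc i)"

lemma CE_nx: "C_E n i j \<longleftrightarrow> i < n \<and> j < n \<and> (j = nx n i \<or> i = nx n j)"
  unfolding CE_alt nx_def by simp

lemma nx_lt: "i < n \<Longrightarrow> nx n i < n" unfolding nx_def by auto
lemma nx_inj: "i < n \<Longrightarrow> j < n \<Longrightarrow> nx n i = nx n j \<Longrightarrow> i = j" unfolding nx_def by (auto split: if_splits)

definition rot :: "nat \<Rightarrow> nat \<Rightarrow> nat \<Rightarrow> nat" where
  "rot n c i = (if i + c < n then i + c else i + c - n)"
definition rfl :: "nat \<Rightarrow> nat \<Rightarrow> nat \<Rightarrow> nat" where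
  "rfl n c i = (if i \<le> c then c - i else c + n - i)"

lemma rot_lt: "c < n \<Longrightarrow> i < n \<Longrightarrow> rot n c i < n" unfolding rot_def by auto
lemma rfl_lt: "c < n \<Longrightarrow> i < n \<Longrightarrow> rfl n c i < n" unfolding rfl_def by auto
lemma rot_inj: "c < n \<Longrightarrow> i < n \<Longrightarrow> j < n \<Longrightarrow> rot n c i = rot n c j \<Longrightarrow> i = j"
  unfolding rot_def by (auto split: if_splits)
lemma rfl_inj: "c < n \<Longrightarrow> i < n \<Longrightarrow> j < n \<Longrightarrow> rfl n c i = rfl n c j \<Longrightarrow> i = j"
  unfolding rfl_def by (auto split: if_splits)
lemma rot_nx: "c < n \<Longrightarrow> i < n \<Longrightarrow> rot n c (nx n i) = nx n (rot n c i)"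
  unfolding rot_def nx_def by auto
lemma rfl_nx: "c < n \<Longrightarrow> i < n \<Longrightarrow> nx n (rfl n c (nx n i)) = rfl n c i"
  unfolding rfl_def nx_def by auto

lemma rot_E: assumes "c < n" "i < n" "j < n" shows "C_E n (rot n c i) (rot n c j) \<longleftrightarrow> C_E n i j"
proof -
  have "rot n c j = nx n (rot n c i) \<longleftrightarrow> j = nx n i"
    using rot_nx[OF assms(1,2)] rot_inj[OF assms(1) assms(3) nx_lt[OF assms(2)]] by auto
  moreover have "rot n c i = nx n (rot n c j) \<longleftrightarrow> i = nx n j"
    using rot_nx[OF assms(1,3)] rot_inj[OF assms(1) assms(2) nx_lt[OF assms(3)]] by auto
  ultimately show ?thesis unfolding CE_nx using rot_lt assms by auto
qed

lemma rfl_E: assumes "c < n" "i < n" "j < n" shows "C_E n (rfl n c i) (rfl n c j) \<longleftrightarrow> C_E n i j"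
proof -
  have a: "rfl n c j = nx n (rfl n c i) \<longleftrightarrow> i = nx n j"
  proof
    assume "i = nx n j" then show "rfl n c j = nx n (rfl n c i)" using rfl_nx[OF assms(1,3)] by simp
  next
    assume h: "rfl n c j = nx n (rfl n c i)"
    have "nx n (rfl n c (nx n j)) = rfl n c j" using rfl_nx[OF assms(1,3)] .
    then have "rfl n c (nx n j) = rfl n c i" using h nx_inj rfl_lt nx_lt assms by metis
    then show "i = nx n j" using rfl_inj[OF assms(1) nx_lt[OF assms(3)] assms(2)] by simp
  qed
  have b: "rfl n c i = nx n (rfl n c j) \<longleftrightarrow> j = nx n i"
  proof
    assume "j = nx n i" then show "rfl n c i = nx n (rfl n c j)" using rfl_nx[OF assms(1,2)] by simp
  next
    assume h: "rfl n c i = nx n (rfl n c j)"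
    have "nx n (rfl n c (nx n i)) = rfl n c i" using rfl_nx[OF assms(1,2)] .
    then have "rfl n c (nx n i) = rfl n c j" using h nx_inj rfl_lt nx_lt assms by metis
    then show "j = nx n i" using rfl_inj[OF assms(1) nx_lt[OF assms(2)] assms(3)] by simp
  qed
  show ?thesis unfolding CE_nx using rfl_lt assms a b by auto
qed

lemma two_nbr: "3 \<le> n \<Longrightarrow> C_E n p a \<Longrightarrow> C_E n p b \<Longrightarrow> C_E n p q \<Longrightarrow> a \<noteq> q \<Longrightarrow> b \<noteq> q \<Longrightarrow> a = b"
  unfolding CE_alt by (auto split: if_splits)

lemma aut_of:
  assumes "\<And>i. i < n \<Longrightarrow> \<phi> i < n" "\<And>i j. i < n \<Longrightarrow> j < n \<Longrightarrow> \<phi> i = \<phi> j \<Longrightarrow> i = j"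
    "\<And>i j. i < n \<Longrightarrow> j < n \<Longrightarrow> C_E n (\<phi> i) (\<phi> j) \<longleftrightarrow> C_E n i j"
  shows "automorphism (C_V n) (C_E n) \<phi>"
proof -
  have inj: "inj_on \<phi> (C_V n)" using assms(2) unfolding inj_on_def C_V_def by auto
  have "\<phi> ` C_V n \<subseteq> C_V n" using assms(1) unfolding C_V_def by auto
  then have "\<phi> ` C_V n = C_V n" using endo_inj_surj[OF _ _ inj] unfolding C_V_def by auto
  then show ?thesis using inj assms(3) unfolding automorphism_def bij_betw_def C_V_def by auto
qed

lemma aut_rot: "c < n \<Longrightarrow> automorphism (C_V n) (C_E n) (rot n c)"
  by (rule aut_of) (auto intro: rot_lt rot_inj simp: rot_E)
lemma aut_refl: "c < n \<Longrightarrow> automorphism (C_V n) (C_E n) (rfl n c)"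
  by (rule aut_of) (auto intro: rfl_lt rfl_inj simp: rfl_E)

lemma aut_vertex: assumes "a0 < n" "b0 < n"
  shows "\<exists>\<phi>. automorphism (C_V n) (C_E n) \<phi> \<and> \<phi> a0 = b0"
proof -
  define c where "c = (if a0 \<le> b0 then b0 - a0 else b0 + n - a0)"
  have "c < n" "rot n c a0 = b0" using assms unfolding c_def rot_def by auto
  then show ?thesis using aut_rot by blast
qed

lemma aut_edge: assumes "C_E n a0 a1" "C_E n b0 b1"
  shows "\<exists>\<phi>. automorphism (C_V n) (C_E n) \<phi> \<and> \<phi> a0 = b0 \<and> \<phi> a1 = b1"
proof -
  have lt: "a0 < n" "a1 < n" "b0 < n" "b1 < n" using assms unfolding CE_nx by auto
  define c where "c = (if a0 \<le> b0 then b0 - a0 else b0 + n - a0)"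
  have c: "c < n" "rot n c a0 = b0" using lt unfolding c_def rot_def by auto
  define e where "e = (if a0 + b0 < n then a0 + b0 else a0 + b0 - n)"
  have e: "e < n" "rfl n e a0 = b0" using lt unfolding e_def rfl_def by auto
  consider "a1 = nx n a0" "b1 = nx n b0" | "a1 = nx n a0" "b0 = nx n b1"
    | "a0 = nx n a1" "b1 = nx n b0" | "a0 = nx n a1" "b0 = nx n b1"
    using assms unfolding CE_nx by blast
  then show ?thesis
  proof cases
    case 1
    then have "rot n c a1 = b1" using rot_nx[OF c(1) lt(1)] c by simp
    then show ?thesis using c aut_rot by blast
  next
    case 2
    have "nx n (rfl n e a1) = nx n b1" using rfl_nx[OF e(1) lt(1)] e 2 by simp
    then have "rfl n e a1 = b1" using nx_inj rfl_lt e(1) lt by metis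
    then show ?thesis using e aut_refl by blast
  next
    case 3
    have "rfl n e a1 = nx n b0" using rfl_nx[OF e(1) lt(2)] e 3 by simp
    then show ?thesis using e aut_refl 3 by blast
  next
    case 4
    have "nx n (rot n c a1) = nx n b1" using rot_nx[OF c(1) lt(2)] c 4 by simp
    then have "rot n c a1 = b1" using nx_inj rot_lt c(1) lt by metis
    then show ?thesis using c aut_rot by blast
  qed
qed

lemma C_MI_C:
  assumes n3: "3 \<le> n"
  shows "C_MI (C_V n) (C_E n)"
  unfolding C_MI_def
proof (intro allI impI, elim conjE)
  fix A f assume cA: "conn_induced (C_V n) (C_E n) A" and mf: "mono_from (C_V n) (C_E n) A f"
  let ?R = "\<lambda>u v. u \<in> A \<and> v \<in> A \<and> C_E n u v"
  have AV: "\<And>a. a \<in> A \<Longrightarrow> a < n" and neA: "A \<noteq> {}"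
    and reach: "\<And>x y. x \<in> A \<Longrightarrow> y \<in> A \<Longrightarrow> ?R\<^sup>*\<^sup>* x y"
    using cA unfolding conn_induced_def C_V_def by auto
  have fV: "\<And>a. a \<in> A \<Longrightarrow> f a < n" and finj: "inj_on f A"
    and fE: "\<And>x y. x \<in> A \<Longrightarrow> y \<in> A \<Longrightarrow> C_E n x y \<Longrightarrow> C_E n (f x) (f y)"
    using mf unfolding mono_from_def C_V_def by auto
  obtain a0 where a0: "a0 \<in> A" using neA by auto
  obtain \<phi> where \<phi>: "automorphism (C_V n) (C_E n) \<phi>" "\<phi> a0 = f a0"
    and \<phi>1: "\<And>a1. a1 \<in> A \<Longrightarrow> C_E n a0 a1 \<Longrightarrow> \<exists>a1'\<in>A. C_E n a0 a1' \<and> \<phi> a1' = f a1'"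
  proof (cases "\<exists>a1\<in>A. C_E n a0 a1")
    case True
    then obtain a1 where a1: "a1 \<in> A" "C_E n a0 a1" by auto
    obtain \<phi> where "automorphism (C_V n) (C_E n) \<phi> \<and> \<phi> a0 = f a0 \<and> \<phi> a1 = f a1"
      using aut_edge[OF a1(2) fE[OF a0 a1]] by blast
    then show ?thesis using that a1 by blast
  next
    case False
    obtain \<phi> where "automorphism (C_V n) (C_E n) \<phi> \<and> \<phi> a0 = f a0"
      using aut_vertex[OF AV[OF a0] fV[OF a0]] by blast
    then show ?thesis using that False by blast
  qed
  have \<phi>V: "\<And>x. x < n \<Longrightarrow> \<phi> x < n" using \<phi>(1) unfolding automorphism_def bij_betw_def C_V_def by auto
  have \<phi>inj: "\<And>x y. x < n \<Longrightarrow> y < n \<Longrightarrow> \<phi> x = \<phi> y \<Longrightarrow> x = y"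
    using \<phi>(1) unfolding automorphism_def bij_betw_def C_V_def inj_on_def by auto
  have \<phi>E: "\<And>x y. x < n \<Longrightarrow> y < n \<Longrightarrow> C_E n x y \<longleftrightarrow> C_E n (\<phi> x) (\<phi> y)"
    using \<phi>(1) unfolding automorphism_def C_V_def by auto
  have key: "\<And>u v w. u \<in> A \<Longrightarrow> v \<in> A \<Longrightarrow> w \<in> A \<Longrightarrow> C_E n v u \<Longrightarrow> C_E n v w \<Longrightarrow> w \<noteq> u
     \<Longrightarrow> f u = \<phi> u \<Longrightarrow> f v = \<phi> v \<Longrightarrow> f w = \<phi> w"
  proof -
    fix u v w assume h: "u \<in> A" "v \<in> A" "w \<in> A" "C_E n v u" "C_E n v w" "w \<noteq> u" "f u = \<phi> u" "f v = \<phi> v"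
    have "C_E n (\<phi> v) (f w)" using fE[OF h(2) h(3) h(5)] h(8) by simp
    moreover have "C_E n (\<phi> v) (\<phi> w)" using \<phi>E h AV by blast
    moreover have "C_E n (\<phi> v) (\<phi> u)" using \<phi>E h AV by blast
    moreover have "f w \<noteq> \<phi> u" using finj h unfolding inj_on_def by metis
    moreover have "\<phi> w \<noteq> \<phi> u" using \<phi>inj h AV by metis
    ultimately show "f w = \<phi> w" using two_nbr[OF n3] by metis
  qed
  define Q where "Q u \<longleftrightarrow> f u = \<phi> u \<and> (\<forall>w\<in>A. C_E n u w \<longrightarrow> f w = \<phi> w)" for u
  have Q0: "Q a0"
    unfolding Q_def
  proof (intro conjI ballI impI)
    show "f a0 = \<phi> a0" using \<phi>(2) by simp
    fix w assume w: "w \<in> A" "C_E n a0 w"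
    obtain a1 where a1: "a1 \<in> A" "C_E n a0 a1" "\<phi> a1 = f a1" using \<phi>1[OF w] by blast
    show "f w = \<phi> w"
    proof (cases "w = a1")
      case True then show ?thesis using a1 by simp
    next
      case False then show ?thesis using key[OF a1(1) a0 w(1) a1(2) w(2)] a1 \<phi>(2) by simp
    qed
  qed
  have QA: "\<And>v. v \<in> A \<Longrightarrow> Q v"
  proof -
    fix v assume "v \<in> A"
    then have "?R\<^sup>*\<^sup>* a0 v" using reach a0 by auto
    then show "Q v"
    proof (induction rule: rtranclp_induct)
      case base then show ?case using Q0 .
    next
      case (step u v)
      then have uv: "u \<in> A" "v \<in> A" "C_E n u v" by auto
      have fv: "f v = \<phi> v" using step.IH uv unfolding Q_def by auto
      have fu: "f u = \<phi> u" using step.IH unfolding Q_def by auto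
      have vu: "C_E n v u" using uv unfolding C_E_def by auto
      show ?case unfolding Q_def
      proof (intro conjI ballI impI)
        show "f v = \<phi> v" by (rule fv)
        fix w assume w: "w \<in> A" "C_E n v w"
        show "f w = \<phi> w"
        proof (cases "w = u")
          case True then show ?thesis using fu by simp
        next
          case False then show ?thesis using key[OF uv(1) uv(2) w(1) vu w(2)] fu fv by simp
        qed
      qed
    qed
  qed
  then have "\<forall>x\<in>A. \<phi> x = f x" unfolding Q_def by auto
  then show "\<exists>g. automorphism (C_V n) (C_E n) g \<and> (\<forall>x\<in>A. g x = f x)" using \<phi>(1) by blast
qed


lemma rev_dir:
  assumes fg: "fin_graph V E" and iso: "graph_iso V E (copies_V m W) (copies_E m F)"
    and C: "C_MI W F" and FW: "\<forall>x y. F x y \<longrightarrow> x \<in> W \<and> y \<in> W"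
  shows "C_MI V E"
proof -
  obtain h where h: "bij_betw h V (copies_V m W)"
    "\<forall>x\<in>V. \<forall>y\<in>V. E x y \<longleftrightarrow> copies_E m F (h x) (h y)"
    using iso unfolding graph_iso_def by blast
  have "\<forall>x y. copies_E m F x y \<longrightarrow> x \<in> copies_V m W \<and> y \<in> copies_V m W"
    using FW unfolding copies_E_def copies_V_def by (auto simp: mem_Times_iff)
  then show ?thesis using C_MI_iso[OF fg h(1) h(2)] C_MI_copies[OF C FW] by blast
qed

lemma rev_main:
  assumes fg: "fin_graph V E"
  shows "(\<exists>m. (\<exists>n\<ge>1. graph_iso V E (copies_V m (K_V n)) (copies_E m (K_E n)))
       \<or> (\<exists>s\<ge>2. graph_iso V E (copies_V m (Kss_V s)) (copies_E m (Kss_E s)))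
       \<or> (\<exists>n\<ge>3. graph_iso V E (copies_V m (C_V n)) (copies_E m (C_E n)))) \<Longrightarrow> C_MI V E"
proof (elim exE disjE conjE)
  fix m n assume "graph_iso V E (copies_V m (K_V n)) (copies_E m (K_E n))"
  then show "C_MI V E" using rev_dir[OF fg _ C_MI_K] unfolding K_E_def K_V_def by auto
next
  fix m s assume "graph_iso V E (copies_V m (Kss_V s)) (copies_E m (Kss_E s))"
  then show "C_MI V E" using rev_dir[OF fg _ C_MI_Kss] unfolding Kss_E_def Kss_V_def by auto
next
  fix m n assume "3 \<le> n" "graph_iso V E (copies_V m (C_V n)) (copies_E m (C_E n))"
  then show "C_MI V E" using rev_dir[OF fg _ C_MI_C] unfolding C_E_def C_V_def by auto
qed

definition cmp :: "('a \<Rightarrow> 'a \<Rightarrow> bool) \<Rightarrow> 'a \<Rightarrow> 'a set" where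
  "cmp E r = {u. E\<^sup>*\<^sup>* r u}"

lemma fg_facts:
  assumes "fin_graph V E"
  shows "finite V" "\<And>x y. E x y \<Longrightarrow> x \<in> V" "\<And>x y. E x y \<Longrightarrow> y \<in> V"
    "\<And>x y. E x y \<Longrightarrow> E y x" "\<And>x. \<not> E x x"
  using assms unfolding fin_graph_def by auto

lemma rt_sym:
  assumes "fin_graph V E" "E\<^sup>*\<^sup>* x y" shows "E\<^sup>*\<^sup>* y x"
proof -
  have "symp E" using fg_facts(4)[OF assms(1)] unfolding symp_def by blast
  then have "symp (E\<^sup>*\<^sup>*)" by (rule symp_rtranclp)
  then show ?thesis using assms(2) unfolding symp_def by blast
qed

lemma cmp_sub: assumes "fin_graph V E" "r \<in> V" shows "cmp E r \<subseteq> V"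
proof
  fix u assume "u \<in> cmp E r"
  then have "E\<^sup>*\<^sup>* r u" unfolding cmp_def by auto
  then show "u \<in> V" by (induction rule: rtranclp_induct) (use assms fg_facts in auto)
qed

lemma cmp_eq: assumes "fin_graph V E" "u \<in> cmp E r" shows "cmp E u = cmp E r"
  using assms rt_sym[OF assms(1)] unfolding cmp_def
  by (auto intro: rtranclp_trans)

lemma cmp_self: "r \<in> cmp E r" unfolding cmp_def by auto

lemma GL:
  assumes fg: "fin_graph V E"
    and loc: "\<forall>r\<in>V. \<exists>\<phi>. bij_betw \<phi> (cmp E r) W \<and> (\<forall>x\<in>cmp E r. \<forall>y\<in>cmp E r. E x y \<longleftrightarrow> F (\<phi> x) (\<phi> y))"
  shows "graph_iso V E (copies_V (card (cmp E ` V)) W) (copies_E (card (cmp E ` V)) F)"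
proof -
  define Cs where "Cs = cmp E ` V"
  define m where "m = card Cs"
  have "finite Cs" unfolding Cs_def using fg_facts(1)[OF fg] by auto
  then obtain ix0 where ix0: "bij_betw ix0 {0..<m} Cs" unfolding m_def using ex_bij_betw_nat_finite by blast
  define ix where "ix = inv_into {0..<m} ix0"
  have ix: "bij_betw ix Cs {0..<m}" unfolding ix_def using ix0 by (rule bij_betw_inv_into)
  have "\<forall>c\<in>Cs. \<exists>\<phi>. bij_betw \<phi> c W \<and> (\<forall>x\<in>c. \<forall>y\<in>c. E x y \<longleftrightarrow> F (\<phi> x) (\<phi> y))"
    using loc unfolding Cs_def by blast
  then obtain \<psi> where \<psi>: "\<And>c. c \<in> Cs \<Longrightarrow> bij_betw (\<psi> c) c W \<and> (\<forall>x\<in>c. \<forall>y\<in>c. E x y \<longleftrightarrow> F (\<psi> c x) (\<psi> c y))"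
    by metis
  define h where "h v = (ix (cmp E v), \<psi> (cmp E v) v)" for v
  have cv: "\<And>v. v \<in> V \<Longrightarrow> cmp E v \<in> Cs" unfolding Cs_def by auto
  have "bij_betw h V (copies_V m W)"
  proof (rule bij_betwI')
    fix x y assume xy: "x \<in> V" "y \<in> V"
    show "(h x = h y) = (x = y)"
    proof
      assume "h x = h y"
      then have e1: "ix (cmp E x) = ix (cmp E y)" unfolding h_def by auto
      have cxy: "cmp E x = cmp E y" using e1 ix cv xy unfolding bij_betw_def inj_on_def by blast
      have e2: "\<psi> (cmp E x) x = \<psi> (cmp E x) y" using \<open>h x = h y\<close> cxy unfolding h_def by auto
      have "y \<in> cmp E x" using cxy cmp_self by metis
      moreover have "inj_on (\<psi> (cmp E x)) (cmp E x)" using \<psi>[OF cv[OF xy(1)]] unfolding bij_betw_def by blast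
      ultimately show "x = y" using inj_onD e2 cmp_self[of x E] by metis
    qed simp
  next
    fix x assume x: "x \<in> V"
    then show "h x \<in> copies_V m W" unfolding h_def copies_V_def
      using bij_betw_apply[OF ix cv[OF x]] bij_betw_apply[OF conjunct1[OF \<psi>[OF cv[OF x]]] cmp_self] by auto
  next
    fix y assume y: "y \<in> copies_V m W"
    then obtain i w where iw: "y = (i, w)" "i < m" "w \<in> W" unfolding copies_V_def by auto
    obtain c where c: "c \<in> Cs" "ix c = i" using ix iw(2) unfolding bij_betw_def by (metis atLeastLessThan_iff image_iff le0)
    obtain r where r: "r \<in> V" "c = cmp E r" using c unfolding Cs_def by auto
    obtain x where x: "x \<in> c" "\<psi> c x = w" using \<psi>[OF c(1)] iw(3) unfolding bij_betw_def by auto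
    have "cmp E x = c" using cmp_eq[OF fg] x r by auto
    moreover have "x \<in> V" using cmp_sub[OF fg r(1)] x r by auto
    ultimately show "\<exists>x\<in>V. y = h x" unfolding h_def using iw c x by auto
  qed
  moreover have "\<forall>x\<in>V. \<forall>y\<in>V. E x y \<longleftrightarrow> copies_E m F (h x) (h y)"
  proof (intro ballI)
    fix x y assume xy: "x \<in> V" "y \<in> V"
    have ixm: "ix (cmp E x) < m" using bij_betw_apply[OF ix cv[OF xy(1)]] by auto
    show "E x y \<longleftrightarrow> copies_E m F (h x) (h y)"
    proof
      assume e: "E x y"
      then have "y \<in> cmp E x" unfolding cmp_def by auto
      then have cy: "cmp E y = cmp E x" using cmp_eq[OF fg] by auto
      show "copies_E m F (h x) (h y)" unfolding copies_E_def h_def cy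
        using ixm e \<psi>[OF cv[OF xy(1)]] cmp_self[of x E] \<open>y \<in> cmp E x\<close> by auto
    next
      assume e: "copies_E m F (h x) (h y)"
      then have "ix (cmp E x) = ix (cmp E y)" unfolding copies_E_def h_def by auto
      then have cy: "cmp E y = cmp E x" using ix cv xy unfolding bij_betw_def inj_on_def by metis
      then have "y \<in> cmp E x" using cmp_self by metis
      then show "E x y" using e \<psi>[OF cv[OF xy(1)]] cmp_self[of x E] unfolding copies_E_def h_def cy by auto
    qed
  qed
  ultimately show ?thesis unfolding graph_iso_def m_def Cs_def by blast
qed


definition path :: "('a \<Rightarrow> 'a \<Rightarrow> bool) \<Rightarrow> 'a list \<Rightarrow> bool" where
  "path E xs \<longleftrightarrow> distinct xs \<and> (\<forall>i. Suc i < length xs \<longrightarrow> E (xs!i) (xs!Suc i))"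

definition indp :: "('a \<Rightarrow> 'a \<Rightarrow> bool) \<Rightarrow> 'a list \<Rightarrow> bool" where
  "indp E xs \<longleftrightarrow> (\<forall>i<length xs. \<forall>j<length xs. E (xs!i) (xs!j) \<longleftrightarrow> (j = Suc i \<or> i = Suc j))"

lemma path_reach0:
  assumes "path E xs" "i < length xs"
  shows "(\<lambda>u v. u \<in> set xs \<and> v \<in> set xs \<and> E u v)\<^sup>*\<^sup>* (xs!0) (xs!i)"
  using assms(2)
proof (induction i)
  case 0 then show ?case by simp
next
  case (Suc i)
  then have "(\<lambda>u v. u \<in> set xs \<and> v \<in> set xs \<and> E u v)\<^sup>*\<^sup>* (xs!0) (xs!i)" by simp
  moreover have "E (xs!i) (xs!Suc i)" using assms(1) Suc.prems unfolding path_def by auto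
  ultimately show ?case using Suc.prems
    by (metis (no_types, lifting) Suc_lessD nth_mem rtranclp.rtrancl_into_rtrancl)
qed

lemma PL:
  assumes fg: "fin_graph V E" and C: "C_MI V E"
    and px: "path E xs" "set xs \<subseteq> V" "indp E xs"
    and py: "path E ys" "set ys \<subseteq> V" and len: "length ys = length xs"
  shows "indp E ys"
proof (cases "xs = []")
  case True then show ?thesis using len unfolding indp_def by auto
next
  case False
  note ff = fg_facts[OF fg]
  let ?n = "length xs"
  define f where "f x = ys ! (inv_into {..<?n} (nth xs) x)" for x
  have bn: "bij_betw (nth xs) {..<?n} (set xs)" using px(1) unfolding path_def by (simp add: bij_betw_nth)
  have fi: "\<And>i. i < ?n \<Longrightarrow> f (xs!i) = ys!i" unfolding f_def using bn
    by (simp add: bij_betw_def inv_into_f_f)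
  let ?R = "\<lambda>u v. u \<in> set xs \<and> v \<in> set xs \<and> E u v"
  have symR: "symp ?R" using ff(4) unfolding symp_def by blast
  have "conn_induced V E (set xs)"
    unfolding conn_induced_def
  proof (intro conjI ballI)
    show "set xs \<subseteq> V" "finite (set xs)" "set xs \<noteq> {}" using px False by auto
    fix x y assume "x \<in> set xs" "y \<in> set xs"
    then obtain i j where ij: "i < ?n" "j < ?n" "x = xs!i" "y = xs!j" by (metis in_set_conv_nth)
    have "?R\<^sup>*\<^sup>* (xs!0) x" "?R\<^sup>*\<^sup>* (xs!0) y" using path_reach0[OF px(1)] ij by auto
    then show "?R\<^sup>*\<^sup>* x y" using symp_rtranclp[OF symR] unfolding symp_def
      by (meson rtranclp_trans)
  qed
  moreover have "mono_from V E (set xs) f"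
    unfolding mono_from_def
  proof (intro conjI ballI impI)
    show "f ` set xs \<subseteq> V"
    proof
      fix y assume "y \<in> f ` set xs"
      then obtain i where "i < ?n" "y = f (xs!i)" by (metis imageE in_set_conv_nth)
      then show "y \<in> V" using fi len py(2) by (metis nth_mem subsetD)
    qed
    show "inj_on f (set xs)"
    proof (rule inj_onI)
      fix x y assume "x \<in> set xs" "y \<in> set xs" "f x = f y"
      then obtain i j where ij: "i < ?n" "j < ?n" "x = xs!i" "y = xs!j" by (metis in_set_conv_nth)
      then have "ys!i = ys!j" using fi \<open>f x = f y\<close> by metis
      then have "i = j" using py(1) ij len unfolding path_def by (simp add: nth_eq_iff_index_eq)
      then show "x = y" using ij by simp
    qed
    fix x y assume "x \<in> set xs" "y \<in> set xs" "E x y"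
    then obtain i j where ij: "i < ?n" "j < ?n" "x = xs!i" "y = xs!j" by (metis in_set_conv_nth)
    then have "j = Suc i \<or> i = Suc j" using px(3) \<open>E x y\<close> unfolding indp_def by auto
    then have "E (ys!i) (ys!j)" using py(1) ij len ff(4) unfolding path_def by auto
    then show "E (f x) (f y)" using fi ij by simp
  qed
  ultimately obtain g where g: "automorphism V E g" "\<forall>x\<in>set xs. g x = f x"
    using C unfolding C_MI_def by blast
  show ?thesis unfolding indp_def
  proof (intro allI impI)
    fix i j assume ij: "i < length ys" "j < length ys"
    have xV: "xs!i \<in> V" "xs!j \<in> V" using px(2) ij len by auto
    have "E (ys!i) (ys!j) \<longleftrightarrow> E (g (xs!i)) (g (xs!j))" using g(2) fi ij len by auto
    also have "\<dots> \<longleftrightarrow> E (xs!i) (xs!j)" using g(1) xV unfolding automorphism_def by auto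
    also have "\<dots> \<longleftrightarrow> (j = Suc i \<or> i = Suc j)" using px(3) ij len unfolding indp_def by auto
    finally show "E (ys!i) (ys!j) \<longleftrightarrow> (j = Suc i \<or> i = Suc j)" .
  qed
qed

lemma VT:
  assumes fg: "fin_graph V E" and C: "C_MI V E" and uv: "u \<in> V" "v \<in> V"
  shows "\<exists>\<sigma>. automorphism V E \<sigma> \<and> \<sigma> u = v"
proof -
  have "conn_induced V E {u}" using uv unfolding conn_induced_def by auto
  moreover have "mono_from V E {u} (\<lambda>_. v)" using uv fg_facts(5)[OF fg] unfolding mono_from_def by auto
  ultimately show ?thesis using C unfolding C_MI_def by blast
qed

definition nbr :: "('a \<Rightarrow> 'a \<Rightarrow> bool) \<Rightarrow> 'a \<Rightarrow> 'a set" where "nbr E v = {u. E v u}"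

lemma aut_nbr:
  assumes fg: "fin_graph V E" and s: "automorphism V E \<sigma>" and u: "u \<in> V"
  shows "bij_betw \<sigma> (nbr E u) (nbr E (\<sigma> u))"
proof -
  note ff = fg_facts[OF fg]
  have b: "bij_betw \<sigma> V V" and sE: "\<forall>x\<in>V. \<forall>y\<in>V. E x y \<longleftrightarrow> E (\<sigma> x) (\<sigma> y)" using s unfolding automorphism_def by auto
  have sub: "nbr E u \<subseteq> V" using ff unfolding nbr_def by auto
  have "\<sigma> ` nbr E u = nbr E (\<sigma> u)"
  proof
    show "\<sigma> ` nbr E u \<subseteq> nbr E (\<sigma> u)" using sE sub u unfolding nbr_def by auto
    show "nbr E (\<sigma> u) \<subseteq> \<sigma> ` nbr E u"
    proof
      fix w assume "w \<in> nbr E (\<sigma> u)"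
      then have w: "w \<in> V" "E (\<sigma> u) w" using ff unfolding nbr_def by auto
      then obtain w' where "w' \<in> V" "w = \<sigma> w'" using b unfolding bij_betw_def by auto
      then show "w \<in> \<sigma> ` nbr E u" using sE u w unfolding nbr_def by auto
    qed
  qed
  moreover have "inj_on \<sigma> (nbr E u)" using b sub unfolding bij_betw_def by (meson inj_on_subset)
  ultimately show ?thesis unfolding bij_betw_def by auto
qed

lemma regular:
  assumes fg: "fin_graph V E" and C: "C_MI V E" and uv: "u \<in> V" "v \<in> V"
  shows "card (nbr E u) = card (nbr E v)"
proof -
  obtain \<sigma> where "automorphism V E \<sigma>" "\<sigma> u = v" using VT[OF fg C uv] by blast
  then show ?thesis using aut_nbr[OF fg _ uv(1)] bij_betw_same_card by metis
qed


lemma caseK: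
  assumes fg: "fin_graph V E" and r: "r \<in> V"
    and P3: "\<And>x y z. x \<noteq> z \<Longrightarrow> E x y \<Longrightarrow> E y z \<Longrightarrow> E x z"
  shows "\<exists>\<phi>. bij_betw \<phi> (cmp E r) (K_V (card (nbr E r) + 1)) \<and>
     (\<forall>x\<in>cmp E r. \<forall>y\<in>cmp E r. E x y \<longleftrightarrow> K_E (card (nbr E r) + 1) (\<phi> x) (\<phi> y))"
proof -
  note ff = fg_facts[OF fg]
  have ceq: "cmp E r = insert r (nbr E r)"
  proof
    show "cmp E r \<subseteq> insert r (nbr E r)"
    proof
      fix u assume "u \<in> cmp E r"
      then have "E\<^sup>*\<^sup>* r u" unfolding cmp_def by auto
      then show "u \<in> insert r (nbr E r)"
      proof (induction rule: rtranclp_induct)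
        case base then show ?case by simp
      next
        case (step u v)
        show ?case
        proof (cases "u = r")
          case True then show ?thesis using step by (simp add: nbr_def)
        next
          case False
          then have "E r u" using step unfolding nbr_def by auto
          then show ?thesis using P3[of r v u] step(2) by (cases "r = v") (auto simp: nbr_def)
        qed
      qed
    qed
    show "insert r (nbr E r) \<subseteq> cmp E r" unfolding cmp_def nbr_def by auto
  qed
  have fin: "finite (nbr E r)" using ff(1) ff(3) unfolding nbr_def by (metis finite_subset mem_Collect_eq subsetI)
  have "r \<notin> nbr E r" using ff(5) unfolding nbr_def by auto
  then have "card (cmp E r) = card (nbr E r) + 1" using ceq fin by simp
  then obtain \<phi> where \<phi>: "bij_betw \<phi> (cmp E r) (K_V (card (nbr E r) + 1))"
    using finite_same_card_bij[of "cmp E r" "K_V (card (nbr E r) + 1)"] ceq fin unfolding K_V_def by auto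
  have "\<forall>x\<in>cmp E r. \<forall>y\<in>cmp E r. E x y \<longleftrightarrow> K_E (card (nbr E r) + 1) (\<phi> x) (\<phi> y)"
  proof (intro ballI)
    fix x y assume xy: "x \<in> cmp E r" "y \<in> cmp E r"
    have "E x y \<longleftrightarrow> x \<noteq> y"
    proof
      assume "E x y" then show "x \<noteq> y" using ff(5) by auto
    next
      assume "x \<noteq> y"
      then consider "x = r" "E r y" | "y = r" "E r x" | "E r x" "E r y"
        using xy ceq unfolding nbr_def by auto
      then show "E x y"
      proof cases
        case 1 then show ?thesis by simp
      next
        case 2 then show ?thesis using ff(4)[OF 2(2)] by simp
      next
        case 3
        have "E x r" using ff(4)[OF 3(1)] .
        then show ?thesis using P3[OF \<open>x \<noteq> y\<close> _ 3(2)] by simp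
      qed
    qed
    moreover have "\<phi> x \<in> K_V (card (nbr E r) + 1)" "\<phi> y \<in> K_V (card (nbr E r) + 1)"
      using xy \<phi> bij_betw_apply by fast+
    moreover have "\<phi> x = \<phi> y \<longleftrightarrow> x = y" using \<phi> xy unfolding bij_betw_def inj_on_def by blast
    ultimately show "E x y \<longleftrightarrow> K_E (card (nbr E r) + 1) (\<phi> x) (\<phi> y)" unfolding K_E_def K_V_def by auto
  qed
  then show ?thesis using \<phi> by blast
qed

lemma caseB:
  assumes fg: "fin_graph V E" and r: "r \<in> V"
    and T: "\<And>x y z. E x y \<Longrightarrow> E y z \<Longrightarrow> \<not> E x z"
    and S: "\<And>a b c e. a \<noteq> c \<Longrightarrow> b \<noteq> e \<Longrightarrow> a \<noteq> e \<Longrightarrow> E a b \<Longrightarrow> E b c \<Longrightarrow> E c e \<Longrightarrow> E a e"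
    and d: "card (nbr E r) \<ge> 1" and reg: "\<And>u. u \<in> V \<Longrightarrow> card (nbr E u) = card (nbr E r)"
  shows "\<exists>\<phi>. bij_betw \<phi> (cmp E r) (Kss_V (card (nbr E r))) \<and>
     (\<forall>x\<in>cmp E r. \<forall>y\<in>cmp E r. E x y \<longleftrightarrow> Kss_E (card (nbr E r)) (\<phi> x) (\<phi> y))"
proof -
  note ff = fg_facts[OF fg]
  define R where "R = nbr E r"
  define L where "L = {u \<in> cmp E r. nbr E u = nbr E r}"
  define d where "d = card R"
  have claim: "\<And>u. u \<in> cmp E r \<Longrightarrow> E r u \<or> nbr E u = nbr E r"
  proof -
    fix u assume "u \<in> cmp E r"
    then have "E\<^sup>*\<^sup>* r u" unfolding cmp_def by auto
    then show "E r u \<or> nbr E u = nbr E r"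
    proof (induction rule: rtranclp_induct)
      case base then show ?case by simp
    next
      case (step u v)
      show ?case
      proof (cases "nbr E u = nbr E r")
        case True
        then show ?thesis using step(2) unfolding nbr_def by auto
      next
        case False
        then have ru: "E r u" using step(3) by auto
        show ?thesis
        proof (cases "v = r")
          case True then show ?thesis by simp
        next
          case vr: False
          have nrv: "\<not> E r v" using T[OF ru step(2)] .
          have "nbr E v = nbr E r"
          proof
            show "nbr E v \<subseteq> nbr E r"
            proof
              fix x assume "x \<in> nbr E v"
              then have vx: "E v x" unfolding nbr_def by auto
              show "x \<in> nbr E r"
              proof (cases "x = u")
                case True then show ?thesis using ru unfolding nbr_def by simp
              next
                case False
                have "x \<noteq> r" using vx nrv ff(4) by blast
                have "E x r" using S[where a=x and b=v and c=u and e=r] vx step(2) ru ff(4) \<open>x \<noteq> r\<close> False vr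
                  by (metis ff(5))
                then show ?thesis using ff(4) unfolding nbr_def by blast
              qed
            qed
            show "nbr E r \<subseteq> nbr E v"
            proof
              fix x assume "x \<in> nbr E r"
              then have rx: "E r x" unfolding nbr_def by auto
              show "x \<in> nbr E v"
              proof (cases "x = u")
                case True then show ?thesis using step(2) ff(4) unfolding nbr_def by blast
              next
                case False
                have "x \<noteq> v" using rx nrv by blast
                have "E x v" using S[where a=x and b=r and c=u and e=v] rx ru step(2) ff(4) \<open>x \<noteq> v\<close> False vr
                  by (metis ff(5))
                then show ?thesis using ff(4) unfolding nbr_def by blast
              qed
            qed
          qed
          then show ?thesis by simp
        qed
      qed
    qed
  qed
  have Rsub: "R \<subseteq> cmp E r" unfolding R_def nbr_def cmp_def by auto
  have finR: "finite R" using ff(1) ff(3) unfolding R_def nbr_def by (metis finite_subset mem_Collect_eq subsetI)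
  have csub: "cmp E r \<subseteq> V" using cmp_sub[OF fg r] .
  have finL: "finite L" using ff(1) csub unfolding L_def by (metis (no_types, lifting) finite_subset mem_Collect_eq subsetI)
  have cLR: "cmp E r = L \<union> R" using claim Rsub unfolding L_def R_def nbr_def by auto
  have dLR: "L \<inter> R = {}"
  proof -
    { fix u assume "u \<in> L" "u \<in> R"
      then have "r \<in> nbr E r" using ff(4) unfolding L_def R_def nbr_def by auto
      then have False using ff(5) unfolding nbr_def by auto }
    then show ?thesis by blast
  qed
  obtain w where w: "w \<in> R" using d finR unfolding R_def by fastforce
  have Lw: "L = nbr E w"
  proof
    show "L \<subseteq> nbr E w" using w ff(4) unfolding L_def R_def nbr_def by auto
    show "nbr E w \<subseteq> L"
    proof
      fix x assume "x \<in> nbr E w"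
      then have wx: "E w x" unfolding nbr_def by auto
      then have xc: "x \<in> cmp E r" using w unfolding R_def nbr_def cmp_def
        by (metis mem_Collect_eq r_into_rtranclp rtranclp.rtrancl_into_rtrancl)
      have "\<not> E r x" using T[of r w x] w wx unfolding R_def nbr_def by auto
      then show "x \<in> L" using claim[OF xc] xc unfolding L_def by auto
    qed
  qed
  have cardL: "card L = d"
  proof -
    have "w \<in> V" using w ff(3) unfolding R_def nbr_def by auto
    then show ?thesis using reg Lw unfolding d_def R_def by auto
  qed
  obtain \<alpha> where \<alpha>: "bij_betw \<alpha> L {0..<d}" using finite_same_card_bij[OF finL, of "{0..<d}"] cardL by auto
  obtain \<beta> where \<beta>: "bij_betw \<beta> R {d..<2*d}" using finite_same_card_bij[OF finR, of "{d..<2*d}"] unfolding d_def by auto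
  define \<phi> where "\<phi> x = (if x \<in> L then \<alpha> x else \<beta> x)" for x
  have "bij_betw \<phi> L {0..<d}" using \<alpha> by (rule bij_betw_cong[THEN iffD1, rotated]) (auto simp: \<phi>_def)
  moreover have "bij_betw \<phi> R {d..<2*d}" using \<beta> by (rule bij_betw_cong[THEN iffD1, rotated]) (use dLR in \<open>auto simp: \<phi>_def\<close>)
  ultimately have "bij_betw \<phi> (L \<union> R) ({0..<d} \<union> {d..<2*d})" by (rule bij_betw_combine) auto
  moreover have "{0..<d} \<union> {d..<2*d} = Kss_V d" unfolding Kss_V_def by auto
  ultimately have \<phi>b: "bij_betw \<phi> (cmp E r) (Kss_V d)" using cLR by simp
  have \<phi>L: "\<And>x. x \<in> L \<Longrightarrow> \<phi> x < d" using \<alpha> unfolding \<phi>_def bij_betw_def by auto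
  have \<phi>R: "\<And>x. x \<in> R \<Longrightarrow> d \<le> \<phi> x \<and> \<phi> x < 2*d" using \<beta> dLR unfolding \<phi>_def bij_betw_def by auto
  have "\<forall>x\<in>cmp E r. \<forall>y\<in>cmp E r. E x y \<longleftrightarrow> Kss_E d (\<phi> x) (\<phi> y)"
  proof (intro ballI)
    fix x y assume xy: "x \<in> cmp E r" "y \<in> cmp E r"
    have "E x y \<longleftrightarrow> (x \<in> L \<and> y \<in> R) \<or> (x \<in> R \<and> y \<in> L)"
    proof
      assume e: "E x y"
      have "\<not> (x \<in> L \<and> y \<in> L)"
      proof
        assume "x \<in> L \<and> y \<in> L"
        then have "y \<in> R" using e unfolding L_def R_def nbr_def by auto
        then show False using dLR \<open>x \<in> L \<and> y \<in> L\<close> by auto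
      qed
      moreover have "\<not> (x \<in> R \<and> y \<in> R)"
      proof
        assume "x \<in> R \<and> y \<in> R"
        then have "E x r" "E r y" using ff(4) unfolding R_def nbr_def by auto
        then show False using T e by blast
      qed
      ultimately show "(x \<in> L \<and> y \<in> R) \<or> (x \<in> R \<and> y \<in> L)" using xy cLR by auto
    next
      assume "(x \<in> L \<and> y \<in> R) \<or> (x \<in> R \<and> y \<in> L)"
      then show "E x y" unfolding L_def R_def nbr_def using ff(4) by auto
    qed
    moreover have "x \<in> L \<or> x \<in> R" "y \<in> L \<or> y \<in> R" using xy cLR by auto
    moreover have "\<And>z. z \<in> L \<or> z \<in> R \<Longrightarrow> \<phi> z < 2*d \<and> (\<phi> z < d \<longleftrightarrow> z \<in> L) \<and> (z \<in> R \<longleftrightarrow> z \<notin> L)"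
    proof -
      fix z assume "z \<in> L \<or> z \<in> R"
      then show "\<phi> z < 2*d \<and> (\<phi> z < d \<longleftrightarrow> z \<in> L) \<and> (z \<in> R \<longleftrightarrow> z \<notin> L)"
      proof
        assume "z \<in> L" then show ?thesis using \<phi>L[of z] dLR by auto
      next
        assume "z \<in> R" then show ?thesis using \<phi>R[of z] dLR by auto
      qed
    qed
    ultimately show "E x y \<longleftrightarrow> Kss_E d (\<phi> x) (\<phi> y)" unfolding Kss_E_def
      by (metis not_le)
  qed
  then show ?thesis using \<phi>b unfolding d_def R_def by blast
qed

lemma caseC:
  assumes fg: "fin_graph V E" and zV: "set zs \<subseteq> V" and dz: "distinct zs" and n: "length zs = n" "3 \<le> n"
    and pat: "\<And>i j. i < n \<Longrightarrow> j < n \<Longrightarrow> E (zs!i) (zs!j) \<longleftrightarrow> C_E n i j"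
    and deg: "\<And>v. v \<in> V \<Longrightarrow> card (nbr E v) = 2"
  shows "\<exists>\<phi>. bij_betw \<phi> (cmp E (zs!0)) (C_V n) \<and>
     (\<forall>x\<in>cmp E (zs!0). \<forall>y\<in>cmp E (zs!0). E x y \<longleftrightarrow> C_E n (\<phi> x) (\<phi> y))"
proof -
  note ff = fg_facts[OF fg]
  have pz: "path E zs" unfolding path_def using dz pat n unfolding C_E_def by auto
  have ceq: "cmp E (zs!0) = set zs"
  proof
    show "set zs \<subseteq> cmp E (zs!0)"
    proof
      fix x assume "x \<in> set zs"
      then obtain i where i: "i < length zs" "x = zs!i" by (metis in_set_conv_nth)
      have "(\<lambda>u v. u \<in> set zs \<and> v \<in> set zs \<and> E u v)\<^sup>*\<^sup>* (zs!0) (zs!i)" using path_reach0[OF pz i(1)] .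
      then have "E\<^sup>*\<^sup>* (zs!0) (zs!i)" by (rule rtranclp_mono[THEN predicate2D, rotated]) auto
      then show "x \<in> cmp E (zs!0)" using i unfolding cmp_def by auto
    qed
    show "cmp E (zs!0) \<subseteq> set zs"
    proof
      fix x assume "x \<in> cmp E (zs!0)"
      then have "E\<^sup>*\<^sup>* (zs!0) x" unfolding cmp_def by auto
      then show "x \<in> set zs"
      proof (induction rule: rtranclp_induct)
        case base then show ?case using n by auto
      next
        case (step u v)
        then obtain i where i: "i < n" "u = zs!i" using n by (metis in_set_conv_nth)
        define p where "p = (if i = 0 then n - 1 else i - 1)"
        have p: "p < n" "i = nx n p" using i n unfolding p_def nx_def by auto
        have nxi: "nx n i < n" using nx_lt i by blast
        have "nx n i \<noteq> p" using i n unfolding p_def nx_def by auto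
        then have ab: "zs!(nx n i) \<noteq> zs!p" using dz nxi p n by (simp add: nth_eq_iff_index_eq)
        have "C_E n i (nx n i)" "C_E n i p" using i nxi p unfolding CE_nx by auto
        then have sub: "{zs!(nx n i), zs!p} \<subseteq> nbr E u" using pat i nxi p unfolding nbr_def by auto
        have uV: "u \<in> V" using i zV n by auto
        have fin: "finite (nbr E u)" using ff(1) ff(3) unfolding nbr_def by (metis finite_subset mem_Collect_eq subsetI)
        have "card {zs!(nx n i), zs!p} = 2" using ab by simp
        then have "{zs!(nx n i), zs!p} = nbr E u" using card_subset_eq[OF fin sub] deg[OF uV] by simp
        then have "v \<in> {zs!(nx n i), zs!p}" using step(2) unfolding nbr_def by auto
        then show ?case using nxi p n by auto
      qed
    qed
  qed
  define \<phi> where "\<phi> = inv_into {..<n} (nth zs)"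
  have bn: "bij_betw (nth zs) {..<n} (set zs)" using dz n by (simp add: bij_betw_nth)
  have \<phi>b: "bij_betw \<phi> (set zs) (C_V n)" unfolding \<phi>_def C_V_def
    using bij_betw_inv_into[OF bn] by (simp add: atLeast0LessThan)
  have \<phi>i: "\<And>i. i < n \<Longrightarrow> \<phi> (zs!i) = i" unfolding \<phi>_def using bn
    by (simp add: bij_betw_def inv_into_f_f)
  have "\<forall>x\<in>set zs. \<forall>y\<in>set zs. E x y \<longleftrightarrow> C_E n (\<phi> x) (\<phi> y)"
  proof (intro ballI)
    fix x y assume "x \<in> set zs" "y \<in> set zs"
    then obtain i j where "i < n" "j < n" "x = zs!i" "y = zs!j" using n by (metis in_set_conv_nth)
    then show "E x y \<longleftrightarrow> C_E n (\<phi> x) (\<phi> y)" using pat \<phi>i by simp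
  qed
  then show ?thesis using \<phi>b ceq by auto
qed


lemma path_sub:
  assumes "path E ys" shows "path E (take k (drop a ys))"
  using assms unfolding path_def by (auto simp: nth_take nth_drop)

lemma exists_nonind:
  assumes fg: "fin_graph V E" and y: "y \<in> V" and d2: "\<And>u. u \<in> V \<Longrightarrow> card (nbr E u) \<ge> 2"
    and p0: "path E xs0" "set xs0 \<subseteq> V" "length xs0 \<ge> 2"
  shows "\<exists>xs. path E xs \<and> set xs \<subseteq> V \<and> \<not> indp E xs"
proof -
  note ff = fg_facts[OF fg]
  let ?P = "\<lambda>xs. path E xs \<and> set xs \<subseteq> V"
  have bnd: "\<forall>xs. ?P xs \<longrightarrow> length xs < card V + 1"
  proof (intro allI impI)
    fix xs assume "?P xs"
    then have "length xs = card (set xs)" unfolding path_def by (simp add: distinct_card)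
    also have "\<dots> \<le> card V" using \<open>?P xs\<close> ff(1) by (simp add: card_mono)
    finally show "length xs < card V + 1" by simp
  qed
  obtain xs where xs: "?P xs" and mx: "\<And>ys. ?P ys \<Longrightarrow> length ys \<le> length xs"
    using Lattices_Big.ex_has_greatest_nat[of ?P xs0 length "card V + 1"] p0 bnd by blast
  define k where "k = length xs"
  have k2: "k \<ge> 2" using mx[of xs0] p0 unfolding k_def by auto
  define u where "u = xs!(k-1)"
  define p where "p = xs!(k-2)"
  have uV: "u \<in> V" using xs k2 unfolding u_def k_def by auto
  have fin: "finite (nbr E u)" using ff(1) ff(3) unfolding nbr_def by (metis finite_subset mem_Collect_eq subsetI)
  obtain w where w: "E u w" "w \<noteq> p"
  proof -
    have "\<not> nbr E u \<subseteq> {p}"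
    proof
      assume "nbr E u \<subseteq> {p}"
      then have "card (nbr E u) \<le> card {p}" by (rule card_mono[rotated]) simp
      then have "card (nbr E u) \<le> 1" by simp
      then show False using d2[OF uV] by simp
    qed
    then show ?thesis using that unfolding nbr_def by auto
  qed
  have "w \<in> set xs"
  proof (rule ccontr)
    assume wn: "w \<notin> set xs"
    have "path E (xs @ [w])"
      unfolding path_def
    proof (intro conjI allI impI)
      show "distinct (xs @ [w])" using xs wn unfolding path_def by simp
      fix i assume i: "Suc i < length (xs @ [w])"
      show "E ((xs @ [w]) ! i) ((xs @ [w]) ! Suc i)"
      proof (cases "Suc i < k")
        case True then show ?thesis using xs unfolding path_def k_def by (simp add: nth_append)
      next
        case False
        then have "i = k - 1" "Suc i = k" using i unfolding k_def by auto
        then show ?thesis using w(1) unfolding u_def k_def by (simp add: nth_append)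
      qed
    qed
    moreover have "set (xs @ [w]) \<subseteq> V" using xs w ff(3) by auto
    ultimately have "?P (xs @ [w])" by blast
    then show False using mx by fastforce
  qed
  then obtain j where j: "j < k" "w = xs!j" unfolding k_def by (metis in_set_conv_nth)
  have "j \<noteq> k - 1" using w ff(5) j unfolding u_def by auto
  moreover have "j \<noteq> k - 2" using w j unfolding p_def by auto
  ultimately have "\<not> indp E xs"
  proof -
    assume a: "j \<noteq> k - 1" "j \<noteq> k - 2"
    show "\<not> indp E xs"
    proof
      assume "indp E xs"
      then have "E (xs!(k-1)) (xs!j) \<longleftrightarrow> (j = Suc (k-1) \<or> k-1 = Suc j)"
        using j k2 unfolding indp_def k_def by auto
      then show False using w(1) j a k2 unfolding u_def by auto
    qed
  qed
  then show ?thesis using xs by blast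
qed

lemma CL:
  assumes min: "\<And>ys. path E ys \<Longrightarrow> set ys \<subseteq> V \<Longrightarrow> length ys < l \<Longrightarrow> indp E ys"
    and py: "path E ys" "set ys \<subseteq> V" "length ys = l"
    and ab: "a < b" "b < l" "E (ys!a) (ys!b)"
  shows "b = Suc a \<or> (a = 0 \<and> b = l - 1)"
proof (rule ccontr)
  assume c: "\<not> (b = Suc a \<or> (a = 0 \<and> b = l - 1))"
  define ws where "ws = take (b - a + 1) (drop a ys)"
  have lw: "length ws = b - a + 1" using ab py unfolding ws_def by auto
  have "length ws < l" using lw c ab by auto
  moreover have "path E ws" unfolding ws_def by (rule path_sub[OF py(1)])
  moreover have "set ws \<subseteq> V" using py(2) unfolding ws_def by (meson order_trans set_drop_subset set_take_subset)
  ultimately have "indp E ws" using min by blast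
  moreover have "ws!0 = ys!a" "ws!(b-a) = ys!b" using ab py unfolding ws_def by auto
  ultimately have "E (ys!a) (ys!b) \<longleftrightarrow> (b - a = Suc 0 \<or> 0 = Suc (b - a))"
    using lw unfolding indp_def by (metis add_gr_0 less_add_one zero_less_one)
  then show False using ab c by auto
qed


lemma all3: "(\<forall>i<(3::nat). P i) \<longleftrightarrow> P 0 \<and> P 1 \<and> P 2"
  by (simp add: numeral_3_eq_3 All_less_Suc2 numeral_2_eq_2)
lemma all4: "(\<forall>i<(4::nat). P i) \<longleftrightarrow> P 0 \<and> P 1 \<and> P 2 \<and> P 3"
  by (simp add: eval_nat_numeral All_less_Suc2)

lemma path3: "fin_graph V E \<Longrightarrow> E a b \<Longrightarrow> E b c \<Longrightarrow> a \<noteq> c \<Longrightarrow> path E [a,b,c]"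
  unfolding path_def using fg_facts(5) by (fastforce simp: all3 less_Suc_eq numeral_3_eq_3)

lemma path4: "fin_graph V E \<Longrightarrow> E a b \<Longrightarrow> E b c \<Longrightarrow> E c e \<Longrightarrow> a \<noteq> c \<Longrightarrow> b \<noteq> e \<Longrightarrow> a \<noteq> e \<Longrightarrow> path E [a,b,c,e]"
  unfolding path_def using fg_facts(5) by (fastforce simp: eval_nat_numeral less_Suc_eq)

lemma indp3: "fin_graph V E \<Longrightarrow> E a b \<Longrightarrow> E b c \<Longrightarrow> \<not> E a c \<Longrightarrow> indp E [a,b,c]"
proof -
  assume fg: "fin_graph V E" and h: "E a b" "E b c" "\<not> E a c"
  note ff = fg_facts[OF fg]
  have "E b a" "E c b" "\<not> E c a" "\<not> E a a" "\<not> E b b" "\<not> E c c" using h ff(4,5) by blast+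
  then show ?thesis using h unfolding indp_def by (simp add: All_less_Suc2)
qed

lemma indp4: "fin_graph V E \<Longrightarrow> E a b \<Longrightarrow> E b c \<Longrightarrow> E c e \<Longrightarrow> \<not> E a c \<Longrightarrow> \<not> E b e \<Longrightarrow> \<not> E a e \<Longrightarrow> indp E [a,b,c,e]"
proof -
  assume fg: "fin_graph V E" and h: "E a b" "E b c" "E c e" "\<not> E a c" "\<not> E b e" "\<not> E a e"
  note ff = fg_facts[OF fg]
  have "E b a" "E c b" "E e c" "\<not> E c a" "\<not> E e b" "\<not> E e a" "\<not> E a a" "\<not> E b b" "\<not> E c c" "\<not> E e e"
    using h ff(4,5) by blast+
  then show ?thesis using h unfolding indp_def by (simp add: All_less_Suc2)
qed

lemma indpD: "indp E xs \<Longrightarrow> i < length xs \<Longrightarrow> j < length xs \<Longrightarrow> E (xs!i) (xs!j) \<longleftrightarrow> (j = Suc i \<or> i = Suc j)"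
  by (simp add: indp_def)

lemma forward:
  assumes fg: "fin_graph V E" and C: "C_MI V E"
  shows "\<exists>m. (\<exists>n\<ge>1. graph_iso V E (copies_V m (K_V n)) (copies_E m (K_E n)))
       \<or> (\<exists>s\<ge>2. graph_iso V E (copies_V m (Kss_V s)) (copies_E m (Kss_E s)))
       \<or> (\<exists>n\<ge>3. graph_iso V E (copies_V m (C_V n)) (copies_E m (C_E n)))"
proof (cases "V = {}")
  case True
  have "graph_iso V E (copies_V 0 (K_V 1)) (copies_E 0 (K_E 1))"
    unfolding graph_iso_def copies_V_def True by (auto simp: bij_betw_def)
  then show ?thesis by blast
next
  case False
  note ff = fg_facts[OF fg]
  obtain r0 where r0: "r0 \<in> V" using False by auto
  define d where "d = card (nbr E r0)"
  have reg: "\<And>u. u \<in> V \<Longrightarrow> card (nbr E u) = d" unfolding d_def using regular[OF fg C _ r0] by blast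
  have finN: "\<And>u. finite (nbr E u)" using ff(1) ff(3) unfolding nbr_def by (metis finite_subset mem_Collect_eq subsetI)
  define m where "m = card (cmp E ` V)"
  show ?thesis
  proof (cases "\<forall>x y z. x \<noteq> z \<longrightarrow> E x y \<longrightarrow> E y z \<longrightarrow> E x z")
    case True
    have "graph_iso V E (copies_V m (K_V (d+1))) (copies_E m (K_E (d+1)))"
      unfolding m_def
    proof (rule GL[OF fg], intro ballI)
      fix r assume r: "r \<in> V"
      show "\<exists>\<phi>. bij_betw \<phi> (cmp E r) (K_V (d+1)) \<and> (\<forall>x\<in>cmp E r. \<forall>y\<in>cmp E r. E x y \<longleftrightarrow> K_E (d+1) (\<phi> x) (\<phi> y))"
        using caseK[OF fg r] True reg[OF r] by metis
    qed
    then show ?thesis by (metis le_add2)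
  next
    case False
    then obtain x y z where xyz: "x \<noteq> z" "E x y" "E y z" "\<not> E x z" by blast
    have pxyz: "path E [x,y,z]" using path3[OF fg xyz(2,3,1)] .
    have ixyz: "indp E [x,y,z]" using indp3[OF fg xyz(2,3,4)] .
    have Vxyz: "set [x,y,z] \<subseteq> V" using xyz ff by auto
    have "{x,z} \<subseteq> nbr E y" using xyz ff(4) unfolding nbr_def by auto
    then have "card {x,z} \<le> card (nbr E y)" using finN card_mono by blast
    then have d2: "d \<ge> 2" using xyz reg[of y] Vxyz by auto
    have "\<exists>xs. path E xs \<and> set xs \<subseteq> V \<and> \<not> indp E xs"
      using exists_nonind[OF fg _ _ pxyz Vxyz] reg d2 Vxyz by auto
    define l where "l = (LEAST l. \<exists>zs. path E zs \<and> set zs \<subseteq> V \<and> length zs = l \<and> \<not> indp E zs)"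
    obtain zs where zs: "path E zs" "set zs \<subseteq> V" "length zs = l" "\<not> indp E zs"
      using LeastI_ex[of "\<lambda>l. \<exists>zs. path E zs \<and> set zs \<subseteq> V \<and> length zs = l \<and> \<not> indp E zs"]
        \<open>\<exists>xs. path E xs \<and> set xs \<subseteq> V \<and> \<not> indp E xs\<close> unfolding l_def by blast
    have min: "\<And>ys. path E ys \<Longrightarrow> set ys \<subseteq> V \<Longrightarrow> length ys < l \<Longrightarrow> indp E ys"
      using not_less_Least unfolding l_def by blast
    have chord: "\<And>a b. a < b \<Longrightarrow> b < l \<Longrightarrow> E (zs!a) (zs!b) \<Longrightarrow> b = Suc a \<or> (a = 0 \<and> b = l - 1)"
      using CL[OF min zs(1,2,3)] by blast
    have cons: "\<And>i. Suc i < l \<Longrightarrow> E (zs!i) (zs!Suc i)" using zs(1,3) unfolding path_def by auto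
    have ends: "E (zs!0) (zs!(l-1)) \<and> l \<ge> 3"
    proof -
      obtain i j where ij: "i < l" "j < l" "\<not> (E (zs!i) (zs!j) \<longleftrightarrow> (j = Suc i \<or> i = Suc j))"
        using zs(4,3) unfolding indp_def by blast
      have e: "E (zs!i) (zs!j)" "j \<noteq> Suc i" "i \<noteq> Suc j"
        using ij cons ff(4) by blast+
      have "i \<noteq> j" using e ff(5) by blast
      then consider "i < j" | "j < i" by linarith
      then show ?thesis
      proof cases
        case 1 then show ?thesis using chord[OF 1 ij(2) e(1)] e by auto
      next
        case 2
        have "E (zs!j) (zs!i)" using ff(4)[OF e(1)] .
        then have "j = 0" "i = l - 1" using chord[OF 2 ij(1)] e by auto
        moreover have "E (zs!0) (zs!(l-1))" using \<open>E (zs!j) (zs!i)\<close> \<open>j = 0\<close> \<open>i = l - 1\<close> by simp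
        moreover have "l \<ge> 3" using \<open>j = 0\<close> \<open>i = l - 1\<close> e(3) 2 by linarith
        ultimately show ?thesis by simp
      qed
    qed
    then have l3: "l \<ge> 3" by simp
    have cyc: "\<And>i j. i < l \<Longrightarrow> j < l \<Longrightarrow> E (zs!i) (zs!j) \<longleftrightarrow> C_E l i j"
    proof -
      fix i j assume ij: "i < l" "j < l"
      have lr: "E (zs!i) (zs!j) \<Longrightarrow> C_E l i j" if ij: "i < l" "j < l" "i < j" for i j
        using chord[OF ij(3) ij(2)] ij unfolding CE_nx nx_def by auto
      have rl: "E (zs!i) (zs!j)" if ij: "i < l" "j < l" "j = nx l i" for i j
      proof (cases "Suc i = l")
        case True
        then have "j = 0" "i = l - 1" using ij unfolding nx_def by auto
        then show ?thesis using ends ff(4) by blast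
      next
        case False
        then show ?thesis using ij cons unfolding nx_def by auto
      qed
      show "E (zs!i) (zs!j) \<longleftrightarrow> C_E l i j"
      proof
        assume e: "E (zs!i) (zs!j)"
        have "i \<noteq> j" using e ff(5) by blast
        then consider "i < j" | "j < i" by linarith
        then show "C_E l i j"
        proof cases
          case 1 then show ?thesis using lr ij e by blast
        next
          case 2 then have "C_E l j i" using lr ij ff(4)[OF e] by blast
          then show ?thesis unfolding C_E_def by auto
        qed
      next
        assume "C_E l i j"
        then have "j = nx l i \<or> i = nx l j" unfolding CE_nx by auto
        then show "E (zs!i) (zs!j)" using rl ij ff(4) by blast
      qed
    qed
    have zsE: "E (zs!0) (zs!(l-1))" using cyc[of 0 "l-1"] l3 unfolding CE_nx nx_def by auto
    have "l \<noteq> 3"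
    proof
      assume "l = 3"
      then have "indp E zs" using PL[OF fg C pxyz Vxyz ixyz zs(1,2)] zs(3) by simp
      then show False using zs(4) by simp
    qed
    show ?thesis
    proof (cases "l = 4")
      case True
      have T: "\<And>a b c. E a b \<Longrightarrow> E b c \<Longrightarrow> \<not> E a c"
      proof
        fix a b c assume h: "E a b" "E b c" "E a c"
        have "a \<noteq> c" using h(3) ff(5) by blast
        then have "path E [a,b,c]" using path3[OF fg h(1,2)] by blast
        moreover have "set [a,b,c] \<subseteq> V" using h ff(2,3) by auto
        ultimately have "indp E [a,b,c]" using min True by auto
        then show False using indpD[of E "[a,b,c]" 0 2] h(3) by simp
      qed
      have S: "\<And>a b c e. a \<noteq> c \<Longrightarrow> b \<noteq> e \<Longrightarrow> a \<noteq> e \<Longrightarrow> E a b \<Longrightarrow> E b c \<Longrightarrow> E c e \<Longrightarrow> E a e"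
      proof (rule ccontr)
        fix a b c e assume h: "a \<noteq> c" "b \<noteq> e" "a \<noteq> e" "E a b" "E b c" "E c e" "\<not> E a e"
        have "indp E [a,b,c,e]" using indp4[OF fg h(4,5,6) T[OF h(4,5)] T[OF h(5,6)] h(7)] .
        moreover have "path E [a,b,c,e]" using path4[OF fg h(4,5,6,1,2,3)] .
        moreover have "set [a,b,c,e] \<subseteq> V" using h ff(2,3) by auto
        ultimately have "indp E zs" using PL[OF fg C _ _ _ zs(1,2)] zs(3) True by simp
        then show False using zs(4) by simp
      qed
      have "graph_iso V E (copies_V m (Kss_V d)) (copies_E m (Kss_E d))"
        unfolding m_def
      proof (rule GL[OF fg], intro ballI)
        fix r assume r: "r \<in> V"
        have "\<And>u. u \<in> V \<Longrightarrow> card (nbr E u) = card (nbr E r)" using reg r by simp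
        then show "\<exists>\<phi>. bij_betw \<phi> (cmp E r) (Kss_V d) \<and> (\<forall>x\<in>cmp E r. \<forall>y\<in>cmp E r. E x y \<longleftrightarrow> Kss_E d (\<phi> x) (\<phi> y))"
          using caseB[OF fg r T S] reg[OF r] d2 by auto
      qed
      then show ?thesis using d2 by blast
    next
      case False
      then have l5: "l \<ge> 5" using l3 \<open>l \<noteq> 3\<close> by auto
      have zl: "\<And>i. i < l \<Longrightarrow> zs!i \<in> V" using zs(2,3) by auto
      have dz: "distinct zs" using zs(1) unfolding path_def by auto
      have d_eq: "d = 2"
      proof (rule ccontr)
        assume "d \<noteq> 2"
        then have d3: "d \<ge> 3" using d2 by auto
        have z1V: "zs!1 \<in> V" using zl l5 by auto
        obtain t where t: "E (zs!1) t" "t \<noteq> zs!0" "t \<noteq> zs!2"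
        proof -
          have "\<not> nbr E (zs!1) \<subseteq> {zs!0, zs!2}"
          proof
            assume "nbr E (zs!1) \<subseteq> {zs!0, zs!2}"
            then have "card (nbr E (zs!1)) \<le> card {zs!0, zs!2}" by (rule card_mono[rotated]) simp
            also have "\<dots> \<le> 2" by (rule card_insert_le_m1) auto
            finally show False using reg[OF z1V] d3 by simp
          qed
          then show ?thesis using that unfolding nbr_def by auto
        qed
        have tV: "t \<in> V" using t ff(3) by blast
        have tz: "t \<notin> set zs"
        proof
          assume "t \<in> set zs"
          then obtain j where j: "j < l" "t = zs!j" using zs(3) by (metis in_set_conv_nth)
          then have "C_E l 1 j" using cyc[of 1 j] t l5 by auto
          then have "j = 2 \<or> j = 0" unfolding CE_nx nx_def using l5 by (auto split: if_splits)
          then show False using t j by auto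
        qed
        have tlsub: "set (tl zs) \<subseteq> set zs" by (cases zs) auto
        define ys where "ys = t # tl zs"
        have ly: "length ys = l" using zs(3) l5 unfolding ys_def by auto
        have y0: "ys!0 = t" unfolding ys_def by simp
        have yS: "\<And>i. Suc i < l \<Longrightarrow> ys!(Suc i) = zs!(Suc i)" unfolding ys_def using zs(3) by (simp add: nth_tl)
        have py: "path E ys" unfolding path_def
        proof (intro conjI allI impI)
          show "distinct ys" using dz tz unfolding ys_def using tlsub by (auto simp: distinct_tl)
          fix i assume i: "Suc i < length ys"
          show "E (ys!i) (ys!Suc i)"
          proof (cases i)
            case 0 then show ?thesis using y0 yS[of 0] i ly t ff(4) by auto
          next
            case (Suc k) then show ?thesis using yS[of k] yS[of i] i ly cons by auto
          qed
        qed
        have yV: "set ys \<subseteq> V" unfolding ys_def using tV zs(2) using tlsub by auto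
        show False
        proof (cases "E t (zs!(l-1))")
          case True
          have a1: "zs!0 \<noteq> zs!(l-1)" "zs!1 \<noteq> zs!(l-1)" using dz zs(3) l5 by (auto simp: nth_eq_iff_index_eq)
          have c0: "E (zs!0) (zs!1)" using cons[of 0] l5 by simp
          have "path E [zs!0, zs!1, t, zs!(l-1)]"
            using path4[OF fg c0 t(1) True] l5 t(2) a1 by auto
          moreover have "set [zs!0, zs!1, t, zs!(l-1)] \<subseteq> V" using zl tV l5 by auto
          ultimately have "indp E [zs!0, zs!1, t, zs!(l-1)]" using min l5 by auto
          then show False using indpD[of E "[zs!0, zs!1, t, zs!(l-1)]" 0 3] zsE by simp
        next
          case False
          have "indp E ys" unfolding indp_def
          proof (intro allI impI)
            fix i j assume ij: "i < length ys" "j < length ys"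
            have lr: "E (ys!i) (ys!j) \<Longrightarrow> j = Suc i" if h: "i < j" "j < l" for i j
            proof -
              assume e: "E (ys!i) (ys!j)"
              have "j = Suc i \<or> (i = 0 \<and> j = l - 1)" using CL[OF min py yV ly h e] .
              moreover have "\<not> (i = 0 \<and> j = l - 1)"
              proof
                assume "i = 0 \<and> j = l - 1"
                then have "ys!i = t" "ys!j = zs!(l-1)" using y0 yS[of "l-2"] l5 by (auto simp: Suc_diff_Suc numeral_2_eq_2)
                then show False using e False by simp
              qed
              ultimately show "j = Suc i" by blast
            qed
            show "E (ys!i) (ys!j) \<longleftrightarrow> (j = Suc i \<or> i = Suc j)"
            proof
              assume e: "E (ys!i) (ys!j)"
              have "i \<noteq> j" using e ff(5) by blast
              then consider "i < j" | "j < i" by linarith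
              then show "j = Suc i \<or> i = Suc j"
              proof cases
                case 1 then show ?thesis using lr[OF 1] ij ly e by auto
              next
                case 2 then show ?thesis using lr[OF 2] ij ly ff(4)[OF e] by auto
              qed
            next
              assume "j = Suc i \<or> i = Suc j"
              then show "E (ys!i) (ys!j)" using py ij ff(4) unfolding path_def by auto
            qed
          qed
          then have "indp E zs" using PL[OF fg C py yV _ zs(1,2)] zs(3) ly by simp
          then show False using zs(4) by simp
        qed
      qed
      have "graph_iso V E (copies_V m (C_V l)) (copies_E m (C_E l))"
        unfolding m_def
      proof (rule GL[OF fg], intro ballI)
        fix r assume r: "r \<in> V"
        obtain \<sigma> where \<sigma>: "automorphism V E \<sigma>" "\<sigma> (zs!0) = r" using VT[OF fg C zl[of 0] r] l5 by auto
        have sinj: "inj_on \<sigma> V" and sE: "\<forall>x\<in>V. \<forall>y\<in>V. E x y \<longleftrightarrow> E (\<sigma> x) (\<sigma> y)"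
          and sV: "\<And>x. x \<in> V \<Longrightarrow> \<sigma> x \<in> V"
          using \<sigma>(1) unfolding automorphism_def bij_betw_def by auto
        let ?zs = "map \<sigma> zs"
        have "set ?zs \<subseteq> V" using zs(2) sV by auto
        moreover have "distinct ?zs" using dz sinj zs(2) by (simp add: distinct_map inj_on_subset)
        moreover have "length ?zs = l" using zs(3) by simp
        moreover have "\<And>i j. i < l \<Longrightarrow> j < l \<Longrightarrow> E (?zs!i) (?zs!j) \<longleftrightarrow> C_E l i j"
          using cyc sE zl zs(3) by simp
        moreover have "\<And>v. v \<in> V \<Longrightarrow> card (nbr E v) = 2" using reg d_eq by simp
        ultimately obtain \<phi> where "bij_betw \<phi> (cmp E (?zs!0)) (C_V l) \<and>
            (\<forall>x\<in>cmp E (?zs!0). \<forall>y\<in>cmp E (?zs!0). E x y \<longleftrightarrow> C_E l (\<phi> x) (\<phi> y))"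
          using caseC[OF fg, of ?zs l] l3 by blast
        moreover have "?zs!0 = r" using \<sigma>(2) zs(3) l5 by simp
        ultimately show "\<exists>\<phi>. bij_betw \<phi> (cmp E r) (C_V l) \<and> (\<forall>x\<in>cmp E r. \<forall>y\<in>cmp E r. E x y \<longleftrightarrow> C_E l (\<phi> x) (\<phi> y))"
          by auto
      qed
      then show ?thesis using l3 by blast
    qed
  qed
qed



theorem theorem4p2:
  fixes V :: "'a set" and E :: "'a \<Rightarrow> 'a \<Rightarrow> bool"
  assumes "fin_graph V E"
  shows "C_MI V E \<longleftrightarrow>
    (\<exists>m. (\<exists>n\<ge>1. graph_iso V E (copies_V m (K_V n)) (copies_E m (K_E n)))
       \<or> (\<exists>s\<ge>2. graph_iso V E (copies_V m (Kss_V s)) (copies_E m (Kss_E s)))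
       \<or> (\<exists>n\<ge>3. graph_iso V E (copies_V m (C_V n)) (copies_E m (C_E n))))"
  using forward[OF assms] rev_main[OF assms] by blast

end
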